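(* Let $|\psi\rangle$ be a normalized $n$-qubit state such that the stabilizer of $|\psi\rangle^{\otimes 2}$ equals $\{\mathbb{1},\mathrm{SWAP}\}$. Let $\epsilon\in(0,1)$, and let $h_1,h_2\in\mathrm{GL}(2,\mathbb{C})$ with $H_1=h_1^\dagger h_1=\mathrm{diag}(1,\epsilon)$ and $H_2=h_2^\dagger h_2=\mathrm{diag}(\epsilon,1)$. Set $|\psi_i\rangle=(\mathbb{1}^{\otimes n-1}\otimes h_i)|\psi\rangle$ and $n_i=\||\psi_i\rangle\|$. Then the maximal success probability of transforming $|\psi\rangle^{\otimes 2}$ into the normalized state $|\psi_1\rangle\otimes|\psi_2\rangle/(n_1n_2)$ by separable operations equals $\frac{2}{1+\epsilon^2}(n_1n_2)^2$, and this probability is attained by an LOCC protocol. This value is strictly larger than $(n_1n_2)^2$, which is the product of the maximal separable-operation success probabilities of the single-state transformations $|\psi\rangle\mapsto|\psi_1\rangle/n_1$ and $|\psi\rangle\mapsto|\psi_2\rangle/n_2$.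
   Context: The two-copy state $|\psi\rangle^{\otimes 2}$ is an $n$-partite state in which party $i$ holds qubit $i$ of both copies (local dimension 4). The stabilizer of $|\psi\rangle^{\otimes 2}$ is the set of $S=\bigotimes_{i=1}^n S^{(i)}$ with $S^{(i)}\in\mathrm{GL}(4,\mathbb{C})$ and $S|\psi\rangle^{\otimes 2}=|\psi\rangle^{\otimes 2}$. $\mathrm{SWAP}=\mathrm{SWAP}^{\otimes n}$, where each party exchanges its two qubits. A separable operation is an operation with Kraus operators of product form $M_k=\bigotimes_i M_k^{(i)}$ with $\sum_k M_k^\dagger M_k\le\mathbb{1}$. Its success probability for a transformation $|a\rangle\mapsto|b\rangle$ of normalized states is $\sum_{k\in K}\|M_k|a\rangle\|^2$, where $K$ is the set of branches satisfying $M_k|a\rangle\propto|b\rangle$. The maximal success probability is the supremum of this over all separable operations. In each transformation the operator $h_i$ acts on the $n$-th party's qubit. *)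

theory Defs
  imports Complex_Main
begin

text \<open>Computational basis
  strings are lists of length n with entries < d; a state is a function on basis strings
  (values outside the basis set are irrelevant / taken to be 0).
  Local operators are d x d matrices given as functions nat => nat => complex
  (only entries with indices < d matter).  A product operator is a family
  M :: nat => (nat => nat => complex), party i < n carrying M i.  Parties are
  numbered 0..n-1, so "the n-th party" is party n-1.\<close>

type_synonym vec = "nat list \<Rightarrow> complex"
type_synonym lmat = "nat \<Rightarrow> nat \<Rightarrow> complex"
type_synonym pop = "nat \<Rightarrow> lmat"

definition Bas :: "nat \<Rightarrow> nat \<Rightarrow> nat list set" where
  "Bas n d = {xs. length xs = n \<and> (\<forall>x\<in>set xs. x < d)}"

definition vnorm :: "nat \<Rightarrow> nat \<Rightarrow> vec \<Rightarrow> real" where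
  "vnorm n d v = sqrt (\<Sum>xs\<in>Bas n d. (cmod (v xs))\<^sup>2)"

definition prod_apply :: "nat \<Rightarrow> nat \<Rightarrow> pop \<Rightarrow> vec \<Rightarrow> vec" where
  "prod_apply n d M v = (\<lambda>ys. if ys \<in> Bas n d
      then (\<Sum>xs\<in>Bas n d. (\<Prod>i<n. M i (ys ! i) (xs ! i)) * v xs) else 0)"

definition idm :: lmat where "idm a b = (if a = b then 1 else 0)"

definition mmul :: "nat \<Rightarrow> lmat \<Rightarrow> lmat \<Rightarrow> lmat" where
  "mmul d A B = (\<lambda>a b. \<Sum>c<d. A a c * B c b)"

definition adj :: "nat \<Rightarrow> lmat \<Rightarrow> lmat" where
  "adj d A = (\<lambda>a b. cnj (A b a))"

definition GL :: "nat \<Rightarrow> lmat set" where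
  "GL d = {A. \<exists>B. (\<forall>a<d. \<forall>b<d. mmul d A B a b = idm a b \<and> mmul d B A a b = idm a b)}"

text \<open>Local SWAP on a party holding two qubits: local basis |b1 b2> has index 2*b1+b2
  (b1: qubit of the first copy, b2: qubit of the second copy).\<close>
definition swap4 :: lmat where
  "swap4 a b = (if a = 2 * (b mod 2) + b div 2 then 1 else 0)"

text \<open>|phi> (x) |chi> of two n-qubit states, regrouped so that party i holds qubit i of
  both states (local dimension 4).\<close>
definition two_copy :: "nat \<Rightarrow> vec \<Rightarrow> vec \<Rightarrow> vec" where
  "two_copy n phi chi = (\<lambda>ys. if ys \<in> Bas n 4
      then phi (map (\<lambda>a. a div 2) ys) * chi (map (\<lambda>a. a mod 2) ys) else 0)"

definition stabilizer :: "nat \<Rightarrow> nat \<Rightarrow> vec \<Rightarrow> (vec \<Rightarrow> vec) set" where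
  "stabilizer n d v = {prod_apply n d S | S. (\<forall>i<n. S i \<in> GL d) \<and> prod_apply n d S v = v}"

text \<open>Separable operation: finite list of product Kraus operators with
  sum_k M_k^dagger M_k <= 1, i.e. sum_k ||M_k v||^2 <= ||v||^2 for all v.\<close>
definition sep_op :: "nat \<Rightarrow> nat \<Rightarrow> pop list \<Rightarrow> bool" where
  "sep_op n d Ms \<longleftrightarrow> (\<forall>v. (\<Sum>M\<leftarrow>Ms. (vnorm n d (prod_apply n d M v))\<^sup>2) \<le> (vnorm n d v)\<^sup>2)"

definition proportional :: "nat \<Rightarrow> nat \<Rightarrow> vec \<Rightarrow> vec \<Rightarrow> bool" where
  "proportional n d u w \<longleftrightarrow> (\<exists>c::complex. \<forall>ys\<in>Bas n d. u ys = c * w ys)"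

definition succ_prob :: "nat \<Rightarrow> nat \<Rightarrow> pop list \<Rightarrow> vec \<Rightarrow> vec \<Rightarrow> real" where
  "succ_prob n d Ms a b =
     (\<Sum>M\<leftarrow>filter (\<lambda>M. proportional n d (prod_apply n d M a) b) Ms.
        (vnorm n d (prod_apply n d M a))\<^sup>2)"

definition max_succ :: "nat \<Rightarrow> nat \<Rightarrow> vec \<Rightarrow> vec \<Rightarrow> real" where
  "max_succ n d a b = Sup {succ_prob n d Ms a b | Ms. sep_op n d Ms}"

text \<open>Local instrument on one party: sum_j A_j^dagger A_j <= 1 on C^d.\<close>
definition local_instr :: "nat \<Rightarrow> lmat list \<Rightarrow> bool" where
  "local_instr d As \<longleftrightarrow> (\<forall>v::nat \<Rightarrow> complex.
     (\<Sum>A\<leftarrow>As. \<Sum>a<d. (cmod (\<Sum>b<d. A a b * v b))\<^sup>2) \<le> (\<Sum>a<d. (cmod (v a))\<^sup>2))"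

text \<open>(Finite-round) LOCC protocols, described by their lists of Kraus operators
  (one per classical outcome history): the trivial protocol, a local (possibly
  trace-decreasing) measurement by a single party, and classically conditioned
  composition (after outcome k of a protocol, run a protocol chosen depending on k).\<close>
inductive LOCC :: "nat \<Rightarrow> nat \<Rightarrow> pop list \<Rightarrow> bool" for n d where
  LOCC_id: "LOCC n d [\<lambda>i. idm]"
| LOCC_local: "p < n \<Longrightarrow> local_instr d As \<Longrightarrow>
     LOCC n d (map (\<lambda>A. \<lambda>i. if i = p then A else idm) As)"
| LOCC_comp: "LOCC n d Ks \<Longrightarrow> (\<forall>k<length Ks. LOCC n d (Ls k)) \<Longrightarrow>
     LOCC n d (concat (map (\<lambda>k. map (\<lambda>L. \<lambda>i. mmul d (L i) ((Ks ! k) i)) (Ls k))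
                        [0..<length Ks]))"

end

theory Submission
  imports Defs "HOL-Library.Function_Algebras"
begin


lemma finite_Bas[simp]: "finite (Bas n d)"
proof (induction n)
  case 0
  have "Bas 0 d = {[]}" by (auto simp: Bas_def)
  then show ?case by simp
next
  case (Suc n)
  have "Bas (Suc n) d = (\<lambda>(x,xs). x#xs) ` ({..<d} \<times> Bas n d)"
    by (auto simp: Bas_def image_iff length_Suc_conv)
  then show ?case using Suc by simp
qed

lemma Bas_0[simp]: "Bas 0 d = {[]}" by (auto simp: Bas_def)

lemma Bas_Suc: "Bas (Suc n) d = (\<lambda>(x,xs). x#xs) ` ({..<d} \<times> Bas n d)"
  by (auto simp: Bas_def image_iff length_Suc_conv)

lemma sum_Bas_Suc: "(\<Sum>xs\<in>Bas (Suc n) d. f xs) = (\<Sum>x<d. \<Sum>xs\<in>Bas n d. f (x#xs))"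
proof -
  have inj: "inj_on (\<lambda>(x,xs). x#xs) ({..<d} \<times> Bas n d)" by (auto simp: inj_on_def)
  have "(\<Sum>xs\<in>Bas (Suc n) d. f xs) = (\<Sum>p\<in>{..<d} \<times> Bas n d. f (fst p # snd p))"
    unfolding Bas_Suc by (subst sum.reindex[OF inj]) (simp add: case_prod_beta)
  also have "\<dots> = (\<Sum>(x,xs)\<in>{..<d} \<times> Bas n d. f (x#xs))"
    by (simp add: case_prod_beta)
  also have "\<dots> = (\<Sum>x<d. \<Sum>xs\<in>Bas n d. f (x#xs))"
    by (rule sum.cartesian_product[symmetric])
  finally show ?thesis .
qed

lemma Bas_mem: "xs \<in> Bas n d \<longleftrightarrow> length xs = n \<and> (\<forall>i<n. xs!i < d)"
  by (auto simp: Bas_def all_set_conv_all_nth)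

lemma Bas_upd:
  assumes "xs \<in> Bas n d" "a < d" shows "xs[i:=a] \<in> Bas n d"
proof -
  have "xs[i:=a]!j < d" if "j < n" for j
    using assms that by (cases "i = j") (auto simp: Bas_mem)
  then show ?thesis using assms by (auto simp: Bas_mem)
qed

lemma sum_prod_Bas: fixes f :: "nat \<Rightarrow> nat \<Rightarrow> 'a::comm_semiring_1" shows "(\<Sum>xs\<in>Bas n d. \<Prod>i<n. f i (xs!i)) = (\<Prod>i<n. \<Sum>c<d. f i c)"
proof (induction n arbitrary: f)
  case 0
  then show ?case by simp
next
  case (Suc n)
  have "(\<Sum>xs\<in>Bas (Suc n) d. \<Prod>i<Suc n. f i (xs!i))
      = (\<Sum>x<d. \<Sum>xs\<in>Bas n d. f 0 x * (\<Prod>i<n. f (Suc i) (xs!i)))"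
    by (simp only: sum_Bas_Suc prod.lessThan_Suc_shift nth_Cons_0 nth_Cons_Suc)
  also have "\<dots> = (\<Sum>x<d. f 0 x * (\<Sum>xs\<in>Bas n d. (\<Prod>i<n. f (Suc i) (xs!i))))"
    by (rule sum.cong[OF refl]) (rule sum_distrib_left[symmetric])
  also have "\<dots> = (\<Sum>x<d. f 0 x) * (\<Prod>i<n. \<Sum>c<d. f (Suc i) c)"
    using Suc[of "\<lambda>i. f (Suc i)"] by (simp add: sum_distrib_right)
  also have "\<dots> = (\<Prod>i<Suc n. \<Sum>c<d. f i c)"
    by (simp only: prod.lessThan_Suc_shift)
  finally show ?case .
qed

lemma prod_apply_out: "ys \<notin> Bas n d \<Longrightarrow> prod_apply n d M v ys = 0"
  by (simp add: prod_apply_def)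

lemma prod_apply_cong:
  assumes "\<And>i a b. i < n \<Longrightarrow> a < d \<Longrightarrow> b < d \<Longrightarrow> A i a b = B i a b"
    and "\<And>ys. ys \<in> Bas n d \<Longrightarrow> v ys = w ys"
  shows "prod_apply n d A v = prod_apply n d B w"
proof (rule ext)
  fix ys
  show "prod_apply n d A v ys = prod_apply n d B w ys"
  proof (cases "ys \<in> Bas n d")
    case True
    have "(\<Prod>i<n. A i (ys ! i) (xs ! i)) * v xs = (\<Prod>i<n. B i (ys ! i) (xs ! i)) * w xs"
      if "xs \<in> Bas n d" for xs
      using that True assms by (auto simp: Bas_mem intro!: prod.cong)
    then show ?thesis using True by (simp add: prod_apply_def)
  qed (simp add: prod_apply_def)
qed

lemma prod_apply_comp:
  "prod_apply n d A (prod_apply n d B v) = prod_apply n d (\<lambda>i. mmul d (A i) (B i)) v"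
proof (rule ext)
  fix ys
  show "prod_apply n d A (prod_apply n d B v) ys = prod_apply n d (\<lambda>i. mmul d (A i) (B i)) v ys"
  proof (cases "ys \<in> Bas n d")
    case True
    have "prod_apply n d A (prod_apply n d B v) ys
       = (\<Sum>xs\<in>Bas n d. (\<Prod>i<n. A i (ys ! i) (xs ! i)) *
            (\<Sum>zs\<in>Bas n d. (\<Prod>i<n. B i (xs ! i) (zs ! i)) * v zs))"
      using True by (simp add: prod_apply_def)
    also have "\<dots> = (\<Sum>zs\<in>Bas n d. (\<Sum>xs\<in>Bas n d. (\<Prod>i<n. A i (ys ! i) (xs ! i)) *
            (\<Prod>i<n. B i (xs ! i) (zs ! i))) * v zs)"
    proof -
      have "(\<Sum>xs\<in>Bas n d. (\<Prod>i<n. A i (ys ! i) (xs ! i)) *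
            (\<Sum>zs\<in>Bas n d. (\<Prod>i<n. B i (xs ! i) (zs ! i)) * v zs))
         = (\<Sum>xs\<in>Bas n d. \<Sum>zs\<in>Bas n d. (\<Prod>i<n. A i (ys ! i) (xs ! i)) *
            ((\<Prod>i<n. B i (xs ! i) (zs ! i)) * v zs))"
        by (simp add: sum_distrib_left)
      also have "\<dots> = (\<Sum>zs\<in>Bas n d. \<Sum>xs\<in>Bas n d. (\<Prod>i<n. A i (ys ! i) (xs ! i)) *
            ((\<Prod>i<n. B i (xs ! i) (zs ! i)) * v zs))"
        by (rule sum.swap)
      also have "\<dots> = (\<Sum>zs\<in>Bas n d. (\<Sum>xs\<in>Bas n d. (\<Prod>i<n. A i (ys ! i) (xs ! i)) *
            (\<Prod>i<n. B i (xs ! i) (zs ! i))) * v zs)"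
        by (simp add: sum_distrib_right mult.assoc)
      finally show ?thesis .
    qed
    also have "\<dots> = (\<Sum>zs\<in>Bas n d. (\<Prod>i<n. mmul d (A i) (B i) (ys ! i) (zs ! i)) * v zs)"
    proof (rule sum.cong[OF refl])
      fix zs
      have "(\<Sum>xs\<in>Bas n d. (\<Prod>i<n. A i (ys ! i) (xs ! i)) * (\<Prod>i<n. B i (xs ! i) (zs ! i)))
          = (\<Sum>xs\<in>Bas n d. \<Prod>i<n. A i (ys ! i) (xs ! i) * B i (xs ! i) (zs ! i))"
        by (simp add: prod.distrib)
      also have "\<dots> = (\<Prod>i<n. \<Sum>c<d. A i (ys ! i) c * B i c (zs ! i))"
        by (rule sum_prod_Bas)
      finally show "(\<Sum>xs\<in>Bas n d. (\<Prod>i<n. A i (ys ! i) (xs ! i)) * (\<Prod>i<n. B i (xs ! i) (zs ! i))) * v zs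
          = (\<Prod>i<n. mmul d (A i) (B i) (ys ! i) (zs ! i)) * v zs"
        by (simp add: mmul_def)
    qed
    also have "\<dots> = prod_apply n d (\<lambda>i. mmul d (A i) (B i)) v ys"
      using True by (simp add: prod_apply_def)
    finally show ?thesis .
  qed (simp add: prod_apply_def)
qed

lemma sum_delta_r: "finite S \<Longrightarrow> (\<Sum>xs\<in>S. F xs * (if xs = x then 1 else 0)) = (if x \<in> S then F x else (0::'a::semiring_1))"
proof -
  assume f: "finite S"
  have "(\<Sum>xs\<in>S. F xs * (if xs = x then 1 else 0)) = (\<Sum>xs\<in>S. if xs = x then F xs else 0)"
    by (rule sum.cong) auto
  then show ?thesis using f by (simp add: sum.delta')
qed

lemma sum_delta_l: "finite S \<Longrightarrow> (\<Sum>xs\<in>S. (if xs = x then 1 else 0) * F xs) = (if x \<in> S then F x else (0::'a::semiring_1))"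
proof -
  assume f: "finite S"
  have "(\<Sum>xs\<in>S. (if xs = x then 1 else 0) * F xs) = (\<Sum>xs\<in>S. if xs = x then F xs else 0)"
    by (rule sum.cong) auto
  then show ?thesis using f by (simp add: sum.delta')
qed

lemma prod_apply_delta:
  assumes "x \<in> Bas n d" "ys \<in> Bas n d"
  shows "prod_apply n d A (\<lambda>zs. if zs = x then 1 else 0) ys = (\<Prod>j<n. A j (ys!j) (x!j))"
proof -
  have "prod_apply n d A (\<lambda>zs. if zs = x then 1 else 0) ys
      = (\<Sum>xs\<in>Bas n d. if xs = x then (\<Prod>j<n. A j (ys!j) (xs!j)) else 0)"
    using assms(2) unfolding prod_apply_def by (simp add: sum_delta_r)
  also have "\<dots> = (\<Prod>j<n. A j (ys!j) (x!j))"
    using assms(1) by simp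
  finally show ?thesis .
qed

lemma prod_idm_eq:
  assumes "xs \<in> Bas n d" "ys \<in> Bas n d"
  shows "(\<Prod>j<n. idm (ys!j) (xs!j)) = (if xs = ys then 1 else 0)"
proof -
  have "xs = ys \<longleftrightarrow> (\<forall>j<n. ys!j = xs!j)"
    using assms by (auto simp: Bas_mem intro: nth_equalityI)
  then show ?thesis by (auto simp: idm_def)
qed

lemma prod_apply_id: "prod_apply n d (\<lambda>i. idm) v = (\<lambda>ys. if ys \<in> Bas n d then v ys else 0)"
proof (rule ext)
  fix ys show "prod_apply n d (\<lambda>i. idm) v ys = (if ys \<in> Bas n d then v ys else 0)"
  proof (cases "ys \<in> Bas n d")
    case True
    have "prod_apply n d (\<lambda>i. idm) v ys = (\<Sum>xs\<in>Bas n d. (if xs = ys then v xs else 0))"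
      using True unfolding prod_apply_def by (simp add: prod_idm_eq sum_delta_l)
    also have "\<dots> = v ys" using True by (simp add: sum.delta)
    finally show ?thesis using True by simp
  qed (simp add: prod_apply_def)
qed

lemma prod_apply_single:
  assumes "i < n"
  shows "prod_apply n d (\<lambda>j. if j = i then A else idm) v
     = (\<lambda>ys. if ys \<in> Bas n d then (\<Sum>b<d. A (ys!i) b * v (ys[i:=b])) else 0)"
proof (rule ext)
  fix ys show "prod_apply n d (\<lambda>j. if j = i then A else idm) v ys
     = (if ys \<in> Bas n d then (\<Sum>b<d. A (ys!i) b * v (ys[i:=b])) else 0)"
  proof (cases "ys \<in> Bas n d")
    case True
    have pr: "(\<Prod>j<n. (if j = i then A else idm) (ys!j) (xs!j))
        = (if xs = ys[i:=xs!i] then A (ys!i) (xs!i) else 0)" if xs: "xs \<in> Bas n d" for xs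
    proof -
      have "(\<Prod>j<n. (if j = i then A else idm) (ys!j) (xs!j))
          = A (ys!i) (xs!i) * (\<Prod>j\<in>{..<n}-{i}. idm (ys!j) (xs!j))"
        using assms by (subst prod.remove[of _ i]) (auto intro!: prod.cong)
      also have "(\<Prod>j\<in>{..<n}-{i}. idm (ys!j) (xs!j)) = (if xs = ys[i:=xs!i] then 1 else 0)"
      proof -
        have "xs = ys[i:=xs!i] \<longleftrightarrow> (\<forall>j\<in>{..<n}-{i}. ys!j = xs!j)"
        proof
          assume h: "xs = ys[i:=xs!i]"
          show "\<forall>j\<in>{..<n}-{i}. ys!j = xs!j"
          proof
            fix j assume "j \<in> {..<n}-{i}"
            then have "ys[i:=xs!i] ! j = ys!j" by simp
            then show "ys!j = xs!j" using h by simp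
          qed
        next
          assume "\<forall>j\<in>{..<n}-{i}. ys!j = xs!j"
          then show "xs = ys[i:=xs!i]"
            using xs True assms by (intro nth_equalityI) (auto simp: Bas_mem nth_list_update)
        qed
        then show ?thesis by (auto simp: idm_def)
      qed
      finally show ?thesis by simp
    qed
    have "prod_apply n d (\<lambda>j. if j = i then A else idm) v ys
        = (\<Sum>xs\<in>Bas n d. if xs = ys[i:=xs!i] then A (ys!i) (xs!i) * v xs else 0)"
      using True pr unfolding prod_apply_def by (auto intro!: sum.cong)
    also have "\<dots> = (\<Sum>xs\<in>(\<lambda>b. ys[i:=b]) ` {..<d}. if xs = ys[i:=xs!i] then A (ys!i) (xs!i) * v xs else 0)"
    proof (rule sum.mono_neutral_right[OF finite_Bas])
      show "(\<lambda>b. ys[i:=b]) ` {..<d} \<subseteq> Bas n d" using True by (auto intro: Bas_upd)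
      show "\<forall>xs\<in>Bas n d - (\<lambda>b. ys[i:=b]) ` {..<d}. (if xs = ys[i:=xs!i] then A (ys!i) (xs!i) * v xs else 0) = 0"
      proof
        fix xs assume xs: "xs \<in> Bas n d - (\<lambda>b. ys[i:=b]) ` {..<d}"
        have "xs!i < d" using xs assms by (auto simp: Bas_mem)
        then show "(if xs = ys[i:=xs!i] then A (ys!i) (xs!i) * v xs else 0) = 0"
          using xs by auto
      qed
    qed
    also have "\<dots> = (\<Sum>xs\<in>(\<lambda>b. ys[i:=b]) ` {..<d}. A (ys!i) (xs!i) * v xs)"
      using True assms by (intro sum.cong) (auto simp: Bas_mem)
    also have "\<dots> = (\<Sum>b<d. A (ys!i) b * v (ys[i:=b]))"
    proof -
      have "inj_on (\<lambda>b. ys[i:=b]) {..<d}"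
        using True assms unfolding inj_on_def Bas_mem by (metis nth_list_update_eq)
      then show ?thesis using True assms by (simp add: sum.reindex Bas_mem)
    qed
    finally show ?thesis using True by simp
  qed (simp add: prod_apply_def)
qed



lemma prod_apply_scale:
  assumes "j < n"
  shows "prod_apply n d (M(j := (\<lambda>a b. k * M j a b))) v = (\<lambda>ys. k * prod_apply n d M v ys)"
proof (rule ext)
  fix ys
  have pr: "(\<Prod>i<n. (M(j := (\<lambda>a b. k * M j a b))) i (ys!i) (xs!i)) = k * (\<Prod>i<n. M i (ys!i) (xs!i))" for xs
  proof -
    have "(\<Prod>i<n. (M(j := (\<lambda>a b. k * M j a b))) i (ys!i) (xs!i))
        = (k * M j (ys!j) (xs!j)) * (\<Prod>i\<in>{..<n}-{j}. M i (ys!i) (xs!i))"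
      using assms by (subst prod.remove[of _ j]) (auto intro!: prod.cong)
    also have "\<dots> = k * (\<Prod>i<n. M i (ys!i) (xs!i))"
      using assms by (subst (2) prod.remove[of _ j]) auto
    finally show ?thesis .
  qed
  show "prod_apply n d (M(j := (\<lambda>a b. k * M j a b))) v ys = k * prod_apply n d M v ys"
    unfolding prod_apply_def by (simp only: pr) (simp add: sum_distrib_left mult.assoc)
qed

lemma prod_apply_smult: "prod_apply n d A (\<lambda>ys. k * v ys) = (\<lambda>ys. k * prod_apply n d A v ys)"
  unfolding prod_apply_def by (auto simp: sum_distrib_left mult_ac)

lemma prod_apply_vcong: "(\<And>ys. ys \<in> Bas n d \<Longrightarrow> v ys = w ys) \<Longrightarrow> prod_apply n d A v = prod_apply n d A w"
  by (rule prod_apply_cong) auto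

lemma vnorm_sq: "(vnorm n d v)\<^sup>2 = (\<Sum>ys\<in>Bas n d. (cmod (v ys))\<^sup>2)"
  unfolding vnorm_def by (simp add: sum_nonneg)

lemma vnorm_nonneg: "vnorm n d v \<ge> 0"
  unfolding vnorm_def by (simp add: sum_nonneg)

lemma vnorm_smult: "vnorm n d (\<lambda>ys. k * v ys) = cmod k * vnorm n d v"
proof -
  have "(\<Sum>ys\<in>Bas n d. (cmod (k * v ys))\<^sup>2) = (cmod k)\<^sup>2 * (\<Sum>ys\<in>Bas n d. (cmod (v ys))\<^sup>2)"
    by (simp add: norm_mult power_mult_distrib sum_distrib_left)
  then show ?thesis unfolding vnorm_def by (simp add: real_sqrt_mult)
qed

lemma vnorm_cong: "(\<And>ys. ys \<in> Bas n d \<Longrightarrow> v ys = w ys) \<Longrightarrow> vnorm n d v = vnorm n d w"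
  unfolding vnorm_def by (metis (no_types, lifting) sum.cong)

lemma colnorm:
  assumes "x \<in> Bas n d"
  shows "(vnorm n d (prod_apply n d A (\<lambda>zs. if zs = x then 1 else 0)))\<^sup>2
       = (\<Prod>j<n. \<Sum>a<d. (cmod (A j a (x!j)))\<^sup>2)"
proof -
  have "(vnorm n d (prod_apply n d A (\<lambda>zs. if zs = x then 1 else 0)))\<^sup>2
      = (\<Sum>ys\<in>Bas n d. (cmod (\<Prod>j<n. A j (ys!j) (x!j)))\<^sup>2)"
    unfolding vnorm_sq using assms by (simp add: prod_apply_delta)
  also have "\<dots> = (\<Sum>ys\<in>Bas n d. \<Prod>j<n. (cmod (A j (ys!j) (x!j)))\<^sup>2)"
    by (simp add: prod_norm[symmetric] prod_power_distrib)
  also have "\<dots> = (\<Prod>j<n. \<Sum>a<d. (cmod (A j a (x!j)))\<^sup>2)"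
    by (rule sum_prod_Bas)
  finally show ?thesis .
qed

lemma vnorm_zero: "vnorm n d v = 0 \<Longrightarrow> ys \<in> Bas n d \<Longrightarrow> v ys = 0"
proof -
  assume h: "vnorm n d v = 0" "ys \<in> Bas n d"
  have "(\<Sum>ys\<in>Bas n d. (cmod (v ys))\<^sup>2) = 0" using h(1) vnorm_sq[of n d v] by simp
  then have "\<forall>ys\<in>Bas n d. (cmod (v ys))\<^sup>2 = 0"
    by (subst (asm) sum_nonneg_eq_0_iff) auto
  then show ?thesis using h(2) by auto
qed

lemma mmul_idm_l: "a < d \<Longrightarrow> mmul d idm A a b = A a b"
proof -
  assume a: "a < d"
  have "mmul d idm A a b = (\<Sum>c<d. if c = a then A c b else 0)"
    unfolding mmul_def idm_def by (rule sum.cong) auto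
  then show ?thesis using a by (simp add: sum.delta')
qed

lemma mmul_idm_r: "b < d \<Longrightarrow> mmul d A idm a b = A a b"
proof -
  assume b: "b < d"
  have "mmul d A idm a b = (\<Sum>c<d. if c = b then A a c else 0)"
    unfolding mmul_def idm_def by (rule sum.cong) auto
  then show ?thesis using b by (simp add: sum.delta')
qed

lemma mmul_assoc: "mmul d (mmul d A B) C a b = mmul d A (mmul d B C) a b"
proof -
  have "mmul d (mmul d A B) C a b = (\<Sum>c<d. \<Sum>e<d. A a e * (B e c * C c b))"
    unfolding mmul_def by (simp add: sum_distrib_right mult.assoc)
  also have "\<dots> = (\<Sum>e<d. \<Sum>c<d. A a e * (B e c * C c b))"
    by (rule sum.swap)
  also have "\<dots> = mmul d A (mmul d B C) a b"
    unfolding mmul_def by (simp add: sum_distrib_left)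
  finally show ?thesis .
qed

lemma mmul_cong: "(\<And>c. c < d \<Longrightarrow> A a c = A' a c) \<Longrightarrow> (\<And>c. c < d \<Longrightarrow> B c b = B' c b)
   \<Longrightarrow> mmul d A B a b = mmul d A' B' a b"
  unfolding mmul_def by (auto intro!: sum.cong)

lemma GL_iff: "A \<in> GL d \<longleftrightarrow> (\<exists>B. \<forall>a<d. \<forall>b<d. mmul d A B a b = idm a b \<and> mmul d B A a b = idm a b)"
  by (simp add: GL_def)

lemma GL_cong: "A \<in> GL d \<Longrightarrow> (\<And>a b. a < d \<Longrightarrow> b < d \<Longrightarrow> A a b = A' a b) \<Longrightarrow> A' \<in> GL d"
proof -
  assume A: "A \<in> GL d" and c: "\<And>a b. a < d \<Longrightarrow> b < d \<Longrightarrow> A a b = A' a b"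
  obtain B where B: "\<forall>a<d. \<forall>b<d. mmul d A B a b = idm a b \<and> mmul d B A a b = idm a b"
    using A by (auto simp: GL_def)
  have "mmul d A' B a b = mmul d A B a b" "mmul d B A' a b = mmul d B A a b" if "a < d" "b < d" for a b
    using that c by (auto intro!: mmul_cong)
  then have "\<forall>a<d. \<forall>b<d. mmul d A' B a b = idm a b \<and> mmul d B A' a b = idm a b" using B by simp
  then show ?thesis unfolding GL_def by blast
qed

lemma idm_GL: "idm \<in> GL d"
proof -
  have "\<forall>a<d. \<forall>b<d. mmul d idm idm a b = idm a b \<and> mmul d idm idm a b = idm a b" by (simp add: mmul_idm_l)
  then show ?thesis unfolding GL_def by blast
qed

lemma GL_scale: "A \<in> GL d \<Longrightarrow> k \<noteq> 0 \<Longrightarrow> (\<lambda>a b. k * A a b) \<in> GL d"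
proof -
  assume A: "A \<in> GL d" and k: "k \<noteq> 0"
  obtain B where B: "\<forall>a<d. \<forall>b<d. mmul d A B a b = idm a b \<and> mmul d B A a b = idm a b"
    using A by (auto simp: GL_def)
  have "mmul d (\<lambda>a b. k * A a b) (\<lambda>a b. inverse k * B a b) a b = mmul d A B a b"
       "mmul d (\<lambda>a b. inverse k * B a b) (\<lambda>a b. k * A a b) a b = mmul d B A a b" for a b
    using k unfolding mmul_def by (auto simp: sum_distrib_left intro!: sum.cong)
  then have "\<forall>a<d. \<forall>b<d. mmul d (\<lambda>a b. k * A a b) (\<lambda>a b. inverse k * B a b) a b = idm a b \<and>
     mmul d (\<lambda>a b. inverse k * B a b) (\<lambda>a b. k * A a b) a b = idm a b" using B by simp
  then show ?thesis unfolding GL_def by blast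
qed

lemma GL_mmul: "A \<in> GL d \<Longrightarrow> B \<in> GL d \<Longrightarrow> mmul d A B \<in> GL d"
proof -
  assume A: "A \<in> GL d" and B: "B \<in> GL d"
  obtain A' where A': "\<forall>a<d. \<forall>b<d. mmul d A A' a b = idm a b \<and> mmul d A' A a b = idm a b"
    using A by (auto simp: GL_def)
  obtain B' where B': "\<forall>a<d. \<forall>b<d. mmul d B B' a b = idm a b \<and> mmul d B' B a b = idm a b"
    using B by (auto simp: GL_def)
  have 1: "mmul d (mmul d A B) (mmul d B' A') a b = idm a b" if "a < d" "b < d" for a b
  proof -
    have "mmul d (mmul d A B) (mmul d B' A') a b = mmul d A (mmul d B (mmul d B' A')) a b"
      by (simp add: mmul_assoc)
    also have "\<dots> = mmul d A (mmul d (mmul d B B') A') a b"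
      by (rule mmul_cong[OF refl]) (simp add: mmul_assoc)
    also have "\<dots> = mmul d A (mmul d idm A') a b"
    proof (rule mmul_cong[OF refl])
      fix c assume c: "c < d"
      show "mmul d (mmul d B B') A' c b = mmul d idm A' c b"
        by (rule mmul_cong) (use B' c in auto)
    qed
    also have "\<dots> = mmul d A A' a b"
      by (intro mmul_cong refl) (simp add: mmul_idm_l)
    finally show ?thesis using A' that by simp
  qed
  have 2: "mmul d (mmul d B' A') (mmul d A B) a b = idm a b" if "a < d" "b < d" for a b
  proof -
    have "mmul d (mmul d B' A') (mmul d A B) a b = mmul d B' (mmul d A' (mmul d A B)) a b"
      by (simp add: mmul_assoc)
    also have "\<dots> = mmul d B' (mmul d (mmul d A' A) B) a b"
      by (rule mmul_cong[OF refl]) (simp add: mmul_assoc)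
    also have "\<dots> = mmul d B' (mmul d idm B) a b"
    proof (rule mmul_cong[OF refl])
      fix c assume c: "c < d"
      show "mmul d (mmul d A' A) B c b = mmul d idm B c b"
        by (rule mmul_cong) (use A' c in auto)
    qed
    also have "\<dots> = mmul d B' B a b"
      by (intro mmul_cong refl) (simp add: mmul_idm_l)
    finally show ?thesis using B' that by simp
  qed
  show ?thesis unfolding GL_def using 1 2 by blast
qed



interpretation fv: vector_space "\<lambda>(c::complex) (f::nat \<Rightarrow> complex). (\<lambda>x. c * f x)"
  by unfold_locales (auto simp: algebra_simps fun_eq_iff)

lemma sum_fun_apply: "(\<Sum>v\<in>T. f v) (x::nat) = (\<Sum>v\<in>T. f v x :: complex)"
proof (cases "finite T")
  case True
  then show ?thesis by (induction T rule: finite_induct) auto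
qed simp

lemma left_inv_exists:
  fixes A :: lmat
  assumes indep: "\<forall>w. (\<forall>b<d. (\<Sum>a<d. w a * A a b) = 0) \<longrightarrow> (\<forall>a<d. w a = 0)"
  shows "\<exists>C. \<forall>b<d. \<forall>c<d. (\<Sum>a<d. C b a * A a c) = idm b c"
proof -
  define row where "row a = (\<lambda>c::nat. if c < d then A a c else 0)" for a :: nat
  define e where "e b = (\<lambda>c::nat. if c = b then 1 else (0::complex))" for b :: nat
  define R where "R = row ` {..<d}"
  define E where "E = e ` {..<d}"
  have inj: "inj_on row {..<d}"
  proof (rule inj_onI, rule ccontr)
    fix a a' assume a: "a \<in> {..<d}" "a' \<in> {..<d}" "row a = row a'" "a \<noteq> a'"
    define w where "w x = (if x = a then 1 else if x = a' then -1 else (0::complex))" for x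
    have "(\<Sum>x<d. w x * A x b) = 0" if b: "b < d" for b
    proof -
      have "(\<Sum>x<d. w x * A x b) = (\<Sum>x<d. (if x = a then A a b else 0) + (if x = a' then - A a' b else 0))"
        by (rule sum.cong) (auto simp: w_def a(4))
      also have "\<dots> = A a b - A a' b" using a by (simp add: sum.distrib)
      also have "\<dots> = 0" using fun_cong[OF a(3), of b] b by (simp add: row_def)
      finally show ?thesis .
    qed
    then have "w a = 0" using indep a by auto
    then show False by (simp add: w_def)
  qed
  have cardR: "card R = d" unfolding R_def using inj by (simp add: card_image)
  have finR: "finite R" unfolding R_def by simp
  have indR: "fv.independent R"
  proof
    assume "fv.dependent R"
    then obtain t u where t: "finite t" "t \<subseteq> R" "(\<Sum>v\<in>t. (\<lambda>x. u v * v x)) = 0" and v0: "\<exists>v\<in>t. u v \<noteq> 0"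
      unfolding fv.dependent_explicit by auto
    define w where "w a = (if row a \<in> t then u (row a) else 0)" for a
    have teq: "t = row ` {a \<in> {..<d}. row a \<in> t}" using t(2) unfolding R_def by auto
    have inj2: "inj_on row {a \<in> {..<d}. row a \<in> t}" using inj by (rule inj_on_subset) auto
    have "(\<Sum>a<d. w a * A a b) = 0" if b: "b < d" for b
    proof -
      have "(\<Sum>a<d. w a * A a b) = (\<Sum>a<d. if row a \<in> t then u (row a) * row a b else 0)"
        using b by (intro sum.cong) (auto simp: w_def row_def)
      also have "\<dots> = (\<Sum>a\<in>{a \<in> {..<d}. row a \<in> t}. u (row a) * row a b)"
        by (rule sum.inter_filter[symmetric]) simp
      also have "\<dots> = (\<Sum>v\<in>t. u v * v b)"
        by (subst (2) teq, subst sum.reindex[OF inj2]) simp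
      also have "\<dots> = (\<Sum>v\<in>t. (\<lambda>x. u v * v x)) b" by (simp add: sum_fun_apply)
      also have "\<dots> = 0" using t(3) by simp
      finally show ?thesis .
    qed
    then have w0: "\<forall>a<d. w a = 0" using indep by blast
    from v0 obtain v where v: "v \<in> t" "u v \<noteq> 0" by auto
    then obtain a where "a < d" "v = row a" using t(2) unfolding R_def by auto
    then show False using w0 v by (auto simp: w_def)
  qed
  have RE: "R \<subseteq> fv.span E"
  proof
    fix r assume "r \<in> R"
    then obtain a where a: "a < d" "r = row a" unfolding R_def by auto
    have "row a = (\<Sum>b<d. (\<lambda>x. A a b * e b x))"
    proof (rule ext)
      fix x
      have "(\<Sum>b<d. (\<lambda>x. A a b * e b x)) x = (\<Sum>b<d. A a b * e b x)" by (simp add: sum_fun_apply)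
      also have "\<dots> = (\<Sum>b<d. if b = x then A a b else 0)" by (rule sum.cong) (auto simp: e_def)
      also have "\<dots> = row a x" by (simp add: sum.delta' row_def)
      finally show "row a x = (\<Sum>b<d. (\<lambda>x. A a b * e b x)) x" by simp
    qed
    also have "\<dots> \<in> fv.span E"
      by (intro fv.span_sum fv.span_scale fv.span_base) (auto simp: E_def)
    finally show "r \<in> fv.span E" using a by simp
  qed
  have eR: "e b \<in> fv.span R" if b: "b < d" for b
  proof (rule ccontr)
    assume nb: "e b \<notin> fv.span R"
    then have nR: "e b \<notin> R" using fv.span_superset by blast
    have ind: "fv.independent (insert (e b) R)" using indR nb nR by (simp add: fv.independent_insert)
    have sub: "insert (e b) R \<subseteq> fv.span E" using RE b by (auto simp: E_def intro: fv.span_base)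
    have "card (insert (e b) R) \<le> card E"
      using fv.independent_span_bound[OF _ ind sub] by (simp add: E_def)
    also have "card E \<le> d" unfolding E_def by (metis card_image_le card_lessThan finite_lessThan)
    finally show False using cardR finR nR by simp
  qed
  have "\<exists>Cb. \<forall>c<d. (\<Sum>a<d. Cb a * A a c) = idm b c" if b: "b < d" for b
  proof -
    obtain t r where tr: "e b = (\<Sum>a\<in>t. (\<lambda>x. r a * a x))" "finite t" "t \<subseteq> R"
      using eR[OF b] unfolding fv.span_explicit by auto
    define Cb where "Cb a = (if row a \<in> t then r (row a) else 0)" for a
    have teq: "t = row ` {a \<in> {..<d}. row a \<in> t}" using tr(3) unfolding R_def by auto
    have inj2: "inj_on row {a \<in> {..<d}. row a \<in> t}" using inj by (rule inj_on_subset) auto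
    have "(\<Sum>a<d. Cb a * A a c) = idm b c" if c: "c < d" for c
    proof -
      have "(\<Sum>a<d. Cb a * A a c) = (\<Sum>a<d. if row a \<in> t then r (row a) * row a c else 0)"
        using c by (intro sum.cong) (auto simp: Cb_def row_def)
      also have "\<dots> = (\<Sum>a\<in>{a \<in> {..<d}. row a \<in> t}. r (row a) * row a c)"
        by (rule sum.inter_filter[symmetric]) simp
      also have "\<dots> = (\<Sum>v\<in>t. r v * v c)"
        by (subst (2) teq, subst sum.reindex[OF inj2]) simp
      also have "\<dots> = (\<Sum>v\<in>t. (\<lambda>x. r v * v x)) c" by (simp add: sum_fun_apply)
      also have "\<dots> = e b c" using tr(1) by simp
      finally show ?thesis by (simp add: e_def idm_def)
    qed
    then show ?thesis by blast
  qed
  then have "\<forall>b. \<exists>Cb. b < d \<longrightarrow> (\<forall>c<d. (\<Sum>a<d. Cb a * A a c) = idm b c)" by blast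
  then obtain C where "\<forall>b. b < d \<longrightarrow> (\<forall>c<d. (\<Sum>a<d. C b a * A a c) = idm b c)"
    by (metis (no_types))
  then show ?thesis by blast
qed

lemma GL_of_indep:
  fixes A :: lmat
  assumes indep: "\<forall>w. (\<forall>b<d. (\<Sum>a<d. w a * A a b) = 0) \<longrightarrow> (\<forall>a<d. w a = 0)"
  shows "A \<in> GL d"
proof -
  obtain C where C: "\<forall>b<d. \<forall>c<d. (\<Sum>a<d. C b a * A a c) = idm b c"
    using left_inv_exists[OF indep] by blast
  have CA: "mmul d C A b c = idm b c" if "b < d" "c < d" for b c
    using C that by (simp add: mmul_def)
  have indC: "\<forall>w. (\<forall>b<d. (\<Sum>a<d. w a * C a b) = 0) \<longrightarrow> (\<forall>a<d. w a = 0)"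
  proof (intro allI impI)
    fix w c assume h: "\<forall>b<d. (\<Sum>a<d. w a * C a b) = 0" and c: "c < d"
    have "w c = (\<Sum>b<d. w b * idm b c)"
      using c by (simp add: idm_def sum.delta' if_distrib[where f="\<lambda>z. _ * z"] cong: if_cong)
    also have "\<dots> = (\<Sum>b<d. w b * (\<Sum>a<d. C b a * A a c))" using C c by simp
    also have "\<dots> = (\<Sum>a<d. (\<Sum>b<d. w b * C b a) * A a c)"
      by (simp add: sum_distrib_left sum_distrib_right mult.assoc) (rule sum.swap)
    also have "\<dots> = 0" using h by simp
    finally show "w c = 0" .
  qed
  obtain D where D: "\<forall>b<d. \<forall>c<d. (\<Sum>a<d. D b a * C a c) = idm b c"
    using left_inv_exists[OF indC] by blast
  have DC: "mmul d D C b c = idm b c" if "b < d" "c < d" for b c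
    using D that by (simp add: mmul_def)
  have DA: "D a b = A a b" if "a < d" "b < d" for a b
  proof -
    have "D a b = mmul d D idm a b" using that by (simp add: mmul_idm_r)
    also have "\<dots> = mmul d D (mmul d C A) a b" using CA that by (intro mmul_cong) auto
    also have "\<dots> = mmul d (mmul d D C) A a b" by (simp add: mmul_assoc)
    also have "\<dots> = mmul d idm A a b" using DC that by (intro mmul_cong) auto
    also have "\<dots> = A a b" using that by (simp add: mmul_idm_l)
    finally show ?thesis .
  qed
  have AC: "mmul d A C b c = idm b c" if "b < d" "c < d" for b c
  proof -
    have "mmul d A C b c = mmul d D C b c" using DA that by (intro mmul_cong) auto
    then show ?thesis using DC that by simp
  qed
  show ?thesis unfolding GL_def using AC CA by blast
qed

lemma not_GL_left_null:
  fixes A :: lmat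
  assumes "A \<notin> GL d"
  shows "\<exists>w. (\<exists>a<d. w a \<noteq> 0) \<and> (\<forall>b<d. (\<Sum>a<d. w a * A a b) = 0)"
  using GL_of_indep[of d A] assms by blast



definition flr :: "nat \<Rightarrow> nat \<Rightarrow> vec \<Rightarrow> nat \<Rightarrow> bool" where
  "flr n d v i \<longleftrightarrow> (\<forall>w. (\<forall>ys\<in>Bas n d. (\<Sum>a<d. w a * v (ys[i:=a])) = 0) \<longrightarrow> (\<forall>a<d. w a = 0))"

lemma sum_idm_l: "a < d \<Longrightarrow> (\<Sum>c<d. idm a c * X c) = X a"
proof -
  assume a: "a < d"
  have "(\<Sum>c<d. idm a c * X c) = (\<Sum>c<d. if c = a then X c else 0)" by (rule sum.cong) (auto simp: idm_def)
  then show ?thesis using a by (simp add: sum.delta')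
qed

lemma sum_idm_r: "b < d \<Longrightarrow> (\<Sum>c<d. X c * idm c b) = X b"
proof -
  assume b: "b < d"
  have "(\<Sum>c<d. X c * idm c b) = (\<Sum>c<d. if c = b then X c else 0)" by (rule sum.cong) (auto simp: idm_def)
  then show ?thesis using b by (simp add: sum.delta')
qed

lemma zeros_Bas: "0 < d \<Longrightarrow> replicate n 0 \<in> Bas n d"
  by (simp add: Bas_def)

lemma single_entry:
  assumes "i < n" "a < d" "b < d"
  shows "prod_apply n d (\<lambda>j. if j = i then A else idm)
           (\<lambda>zs. if zs = (replicate n 0)[i:=b] then 1 else 0) ((replicate n 0)[i:=a]) = A a b"
proof -
  have z: "(replicate n 0)[i:=a] \<in> Bas n d" using assms by (intro Bas_upd zeros_Bas) auto
  have eq: "((replicate n (0::nat))[i:=b'] = (replicate n 0)[i:=b]) \<longleftrightarrow> b' = b" for b'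
    using assms(1) by (metis length_replicate nth_list_update_eq)
  have "prod_apply n d (\<lambda>j. if j = i then A else idm)
           (\<lambda>zs. if zs = (replicate n 0)[i:=b] then 1 else 0) ((replicate n 0)[i:=a])
      = (\<Sum>b'<d. A a b' * (if b' = b then 1 else 0))"
    using assms z by (simp add: prod_apply_single eq)
  also have "\<dots> = A a b" using assms by (simp add: sum_delta_r)
  finally show ?thesis .
qed

lemma single_eq_entries:
  assumes "i < n" "a < d" "b < d"
    and "prod_apply n d (\<lambda>j. if j = i then A else idm) = prod_apply n d (\<lambda>j. if j = i then B else idm)"
  shows "A a b = B a b"
  using single_entry[OF assms(1-3), of A] single_entry[OF assms(1-3), of B] assms(4) by simp

definition r1E :: "nat \<Rightarrow> (nat \<Rightarrow> complex) \<Rightarrow> lmat" where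
  "r1E d w = (\<lambda>a b. cnj (w a) / complex_of_real (\<Sum>c<d. (cmod (w c))\<^sup>2) * w b)"

lemma rank1_stab:
  fixes t :: real
  assumes i: "i < n" and a0: "a0 < d" "w a0 \<noteq> 0"
    and annih: "\<forall>ys\<in>Bas n d. (\<Sum>a<d. w a * v (ys[i:=a])) = 0"
    and vout: "\<forall>xs. xs \<notin> Bas n d \<longrightarrow> v xs = 0"
    and t: "t \<ge> 0"
  shows "(\<lambda>a b. idm a b + complex_of_real t * r1E d w a b) \<in> GL d"
    and "prod_apply n d (\<lambda>j. if j = i then (\<lambda>a b. idm a b + complex_of_real t * r1E d w a b) else idm) v = v"
    and "r1E d w a0 a0 \<noteq> 0"
proof -
  define W where "W = (\<Sum>c<d. (cmod (w c))\<^sup>2)"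
  have Wpos: "W > 0"
  proof -
    have "(cmod (w a0))\<^sup>2 \<le> W" unfolding W_def using a0 by (intro member_le_sum) auto
    moreover have "(cmod (w a0))\<^sup>2 > 0" using a0 by simp
    ultimately show ?thesis by linarith
  qed
  have E: "r1E d w a b = cnj (w a) / complex_of_real W * w b" for a b by (simp add: r1E_def W_def)
  have one: "(\<Sum>c<d. w c * cnj (w c)) = complex_of_real W"
    unfolding W_def by (simp only: of_real_sum complex_norm_square)
  have EE: "(\<Sum>c<d. r1E d w a c * r1E d w c b) = r1E d w a b" for a b
  proof -
    have "(\<Sum>c<d. r1E d w a c * r1E d w c b) = cnj (w a) / complex_of_real W * (\<Sum>c<d. w c * cnj (w c)) / complex_of_real W * w b"
      by (simp add: E sum_distrib_left sum_distrib_right sum_divide_distrib mult_ac)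
    also have "\<dots> = r1E d w a b" using Wpos by (simp add: one E)
    finally show ?thesis .
  qed
  define s where "s = t / (1 + t)"
  have ts: "t - s - t * s = 0" using t by (simp add: s_def field_simps)
  have prod1: "mmul d (\<lambda>a b. idm a b + complex_of_real x * r1E d w a b)
                     (\<lambda>a b. idm a b + complex_of_real y * r1E d w a b) a b
     = idm a b + complex_of_real (x + y + x * y) * r1E d w a b" if "a < d" "b < d" for a b x y
  proof -
    have "mmul d (\<lambda>a b. idm a b + complex_of_real x * r1E d w a b)
                     (\<lambda>a b. idm a b + complex_of_real y * r1E d w a b) a b
        = (\<Sum>c<d. idm a c * idm c b) + complex_of_real y * (\<Sum>c<d. idm a c * r1E d w c b)
          + complex_of_real x * (\<Sum>c<d. r1E d w a c * idm c b)
          + complex_of_real x * complex_of_real y * (\<Sum>c<d. r1E d w a c * r1E d w c b)"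
      unfolding mmul_def by (simp add: algebra_simps sum.distrib sum_distrib_left)
    also have "\<dots> = idm a b + complex_of_real (x + y + x * y) * r1E d w a b"
      using that by (simp add: sum_idm_l sum_idm_r EE) (simp add: algebra_simps)
    finally show ?thesis .
  qed
  show "(\<lambda>a b. idm a b + complex_of_real t * r1E d w a b) \<in> GL d"
  proof -
    have "\<forall>a<d. \<forall>b<d. mmul d (\<lambda>a b. idm a b + complex_of_real t * r1E d w a b)
                     (\<lambda>a b. idm a b + complex_of_real (-s) * r1E d w a b) a b = idm a b \<and>
        mmul d (\<lambda>a b. idm a b + complex_of_real (-s) * r1E d w a b)
                     (\<lambda>a b. idm a b + complex_of_real t * r1E d w a b) a b = idm a b"
    proof (intro allI impI conjI)
      fix a b assume "a < d" "b < d"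
      then show "mmul d (\<lambda>a b. idm a b + complex_of_real t * r1E d w a b)
                     (\<lambda>a b. idm a b + complex_of_real (-s) * r1E d w a b) a b = idm a b"
           "mmul d (\<lambda>a b. idm a b + complex_of_real (-s) * r1E d w a b)
                     (\<lambda>a b. idm a b + complex_of_real t * r1E d w a b) a b = idm a b"
        using ts prod1[of a b t "-s"] prod1[of a b "-s" t] by (simp_all add: algebra_simps del: of_real_minus)
    qed
    then show ?thesis unfolding GL_def by blast
  qed
  show "prod_apply n d (\<lambda>j. if j = i then (\<lambda>a b. idm a b + complex_of_real t * r1E d w a b) else idm) v = v"
  proof (rule ext)
    fix ys
    show "prod_apply n d (\<lambda>j. if j = i then (\<lambda>a b. idm a b + complex_of_real t * r1E d w a b) else idm) v ys = v ys"
    proof (cases "ys \<in> Bas n d")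
      case True
      have yi: "ys!i < d" using True i by (simp add: Bas_mem)
      have "prod_apply n d (\<lambda>j. if j = i then (\<lambda>a b. idm a b + complex_of_real t * r1E d w a b) else idm) v ys
          = (\<Sum>b<d. idm (ys!i) b * v (ys[i:=b])) + complex_of_real t * (cnj (w (ys!i)) / complex_of_real W) * (\<Sum>b<d. w b * v (ys[i:=b]))"
        using True i by (simp add: prod_apply_single E algebra_simps sum.distrib sum_distrib_left)
      also have "\<dots> = v ys" using True annih yi by (simp add: sum_idm_l)
      finally show ?thesis .
    qed (simp add: prod_apply_def vout)
  qed
  show "r1E d w a0 a0 \<noteq> 0" using a0 Wpos by (simp add: E)
qed



lemma slice_annih:
  assumes i: "i < n" and ys: "ys \<in> Bas n d"
    and wN: "\<forall>b<d. (\<Sum>a<d. w a * N i a b) = 0"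
  shows "(\<Sum>a<d. w a * prod_apply n d N v (ys[i:=a])) = 0"
proof -
  have yb: "ys[i:=a] \<in> Bas n d" if "a < d" for a using ys that by (rule Bas_upd)
  have "(\<Sum>a<d. w a * prod_apply n d N v (ys[i:=a]))
      = (\<Sum>a<d. \<Sum>xs\<in>Bas n d. w a * ((\<Prod>j<n. N j ((ys[i:=a])!j) (xs!j)) * v xs))"
    using yb by (simp add: prod_apply_def sum_distrib_left)
  also have "\<dots> = (\<Sum>xs\<in>Bas n d. \<Sum>a<d. w a * ((\<Prod>j<n. N j ((ys[i:=a])!j) (xs!j)) * v xs))"
    by (rule sum.swap)
  also have "\<dots> = 0"
  proof (rule sum.neutral, rule ballI)
    fix xs assume xs: "xs \<in> Bas n d"
    have pr: "(\<Prod>j<n. N j ((ys[i:=a])!j) (xs!j)) = N i a (xs!i) * (\<Prod>j\<in>{..<n}-{i}. N j (ys!j) (xs!j))" for a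
    proof -
      have "(\<Prod>j<n. N j ((ys[i:=a])!j) (xs!j)) = N j0 ((ys[i:=a])!j0) (xs!j0) * (\<Prod>j\<in>{..<n}-{j0}. N j ((ys[i:=a])!j) (xs!j))"
        if "j0 = i" for j0 using i that by (subst prod.remove[of _ j0]) auto
      then have "(\<Prod>j<n. N j ((ys[i:=a])!j) (xs!j)) = N i a (xs!i) * (\<Prod>j\<in>{..<n}-{i}. N j ((ys[i:=a])!j) (xs!j))"
        using i ys by (simp add: Bas_mem)
      also have "(\<Prod>j\<in>{..<n}-{i}. N j ((ys[i:=a])!j) (xs!j)) = (\<Prod>j\<in>{..<n}-{i}. N j (ys!j) (xs!j))"
        by (rule prod.cong) auto
      finally show ?thesis .
    qed
    have "(\<Sum>a<d. w a * ((\<Prod>j<n. N j ((ys[i:=a])!j) (xs!j)) * v xs))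
        = (\<Sum>a<d. (w a * N i a (xs!i)) * ((\<Prod>j\<in>{..<n}-{i}. N j (ys!j) (xs!j)) * v xs))"
      by (rule sum.cong) (simp_all add: pr mult_ac)
    also have "\<dots> = (\<Sum>a<d. w a * N i a (xs!i)) * ((\<Prod>j\<in>{..<n}-{i}. N j (ys!j) (xs!j)) * v xs)"
      by (rule sum_distrib_right[symmetric])
    also have "\<dots> = 0" using wN xs i by (simp add: Bas_mem)
    finally show "(\<Sum>a<d. w a * ((\<Prod>j<n. N j ((ys[i:=a])!j) (xs!j)) * v xs)) = 0" .
  qed
  finally show ?thesis .
qed

lemma core:
  assumes n: "0 < n"
    and fl: "\<forall>i<n. flr n d v0 i"
    and K: "K \<in> GL d"
    and vout: "\<forall>xs. xs \<notin> Bas n d \<longrightarrow> v0 xs = 0"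
    and c: "c \<noteq> 0"
    and Mv: "prod_apply n d M v0 = (\<lambda>ys. c * prod_apply n d (\<lambda>j. if j = n-1 then K else idm) v0 ys)"
  shows "\<exists>S. (\<forall>i<n. S i \<in> GL d) \<and> prod_apply n d S v0 = v0 \<and>
     (\<forall>v. prod_apply n d M v = (\<lambda>ys. c * prod_apply n d (\<lambda>j. if j = n-1 then K else idm) (prod_apply n d S v) ys))"
proof -
  obtain Ki where Ki: "\<forall>a<d. \<forall>b<d. mmul d K Ki a b = idm a b \<and> mmul d Ki K a b = idm a b"
    using K by (auto simp: GL_def)
  define G where "G = (\<lambda>j. if j = n-1 then K else idm)"
  define Gi where "Gi = (\<lambda>j. if j = n-1 then Ki else idm)"
  have GiG: "prod_apply n d Gi (prod_apply n d G w) = (\<lambda>ys. if ys \<in> Bas n d then w ys else 0)" for w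
  proof -
    have "prod_apply n d Gi (prod_apply n d G w) = prod_apply n d (\<lambda>i. mmul d (Gi i) (G i)) w"
      by (rule prod_apply_comp)
    also have "\<dots> = prod_apply n d (\<lambda>i. idm) w"
      by (rule prod_apply_cong) (auto simp: Gi_def G_def Ki mmul_idm_l)
    finally show ?thesis by (simp add: prod_apply_id)
  qed
  have GGi: "prod_apply n d G (prod_apply n d Gi w) = (\<lambda>ys. if ys \<in> Bas n d then w ys else 0)" for w
  proof -
    have "prod_apply n d G (prod_apply n d Gi w) = prod_apply n d (\<lambda>i. mmul d (G i) (Gi i)) w"
      by (rule prod_apply_comp)
    also have "\<dots> = prod_apply n d (\<lambda>i. idm) w"
      by (rule prod_apply_cong) (auto simp: Gi_def G_def Ki mmul_idm_l)
    finally show ?thesis by (simp add: prod_apply_id)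
  qed
  define N where "N = (\<lambda>j. mmul d (Gi j) (M j))"
  have Nv: "prod_apply n d N v = prod_apply n d Gi (prod_apply n d M v)" for v
    unfolding N_def by (rule prod_apply_comp[symmetric])
  have Nv0: "prod_apply n d N v0 = (\<lambda>ys. c * v0 ys)"
  proof -
    have "prod_apply n d N v0 = prod_apply n d Gi (\<lambda>ys. c * prod_apply n d G v0 ys)"
      using Nv Mv by (simp add: G_def)
    also have "\<dots> = (\<lambda>ys. c * (if ys \<in> Bas n d then v0 ys else 0))"
      by (simp add: prod_apply_smult GiG)
    also have "\<dots> = (\<lambda>ys. c * v0 ys)" using vout by (auto simp: fun_eq_iff)
    finally show ?thesis .
  qed
  have NGL: "N i \<in> GL d" if i: "i < n" for i
  proof (rule ccontr)
    assume "N i \<notin> GL d"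
    then obtain w where w: "\<exists>a<d. w a \<noteq> 0" "\<forall>b<d. (\<Sum>a<d. w a * N i a b) = 0"
      using not_GL_left_null by blast
    have "(\<Sum>a<d. w a * v0 (ys[i:=a])) = 0" if ys: "ys \<in> Bas n d" for ys
    proof -
      have "(\<Sum>a<d. w a * prod_apply n d N v0 (ys[i:=a])) = 0"
        using slice_annih[where N=N and w=w and v=v0, OF i ys w(2)] .
      then have "c * (\<Sum>a<d. w a * v0 (ys[i:=a])) = 0"
        by (simp add: Nv0 sum_distrib_left mult_ac)
      then show ?thesis using c by simp
    qed
    then have "\<forall>a<d. w a = 0" using fl i unfolding flr_def by blast
    then show False using w(1) by auto
  qed
  define S where "S = N(0 := (\<lambda>a b. (1/c) * N 0 a b))"
  have SGL: "\<forall>i<n. S i \<in> GL d"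
  proof (intro allI impI)
    fix i assume i: "i < n"
    show "S i \<in> GL d"
    proof (cases "i = 0")
      case True
      have "(\<lambda>a b. (1/c) * N 0 a b) \<in> GL d" using NGL[of 0] n c by (intro GL_scale) auto
      then show ?thesis using True by (simp add: S_def)
    qed (use NGL i in \<open>simp add: S_def\<close>)
  qed
  have Sv: "prod_apply n d S v = (\<lambda>ys. (1/c) * prod_apply n d N v ys)" for v
    unfolding S_def using n by (rule prod_apply_scale)
  have Sv0: "prod_apply n d S v0 = v0"
    using c by (simp add: Sv Nv0)
  have "prod_apply n d M v = (\<lambda>ys. c * prod_apply n d G (prod_apply n d S v) ys)" for v
  proof -
    have "prod_apply n d G (prod_apply n d S v) = (\<lambda>ys. (1/c) * prod_apply n d G (prod_apply n d N v) ys)"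
      unfolding Sv by (rule prod_apply_smult)
    also have "\<dots> = (\<lambda>ys. (1/c) * prod_apply n d M v ys)"
      by (auto simp: Nv GGi fun_eq_iff prod_apply_out)
    finally show ?thesis using c by (simp add: fun_eq_iff)
  qed
  then show ?thesis using SGL Sv0 unfolding G_def by blast
qed



definition kr :: "lmat \<Rightarrow> lmat \<Rightarrow> lmat" where
  "kr A B = (\<lambda>a b. A (a div 2) (b div 2) * B (a mod 2) (b mod 2))"

lemma lessThan_4: "{..<4::nat} = {0,1,2,3}" by auto
lemma lessThan_2: "{..<2::nat} = {0,1}" by auto

lemma sum4: "(\<Sum>c<4::nat. f c) = f 0 + f 1 + f 2 + f 3"
  by (simp add: lessThan_4 add.assoc)
lemma sum2: "(\<Sum>c<2::nat. f c) = f 0 + f 1"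
  by (simp add: lessThan_2)

lemma less4_cases: "(a::nat) < 4 \<Longrightarrow> a = 0 \<or> a = 1 \<or> a = 2 \<or> a = 3" by auto
lemma less2_cases: "(a::nat) < 2 \<Longrightarrow> a = 0 \<or> a = 1" by auto

lemma mmul_kr: "mmul 4 (kr A B) (kr C D) a b = kr (mmul 2 A C) (mmul 2 B D) a b"
  unfolding mmul_def kr_def by (simp add: sum4 sum2 algebra_simps)

lemma kr_idm: "kr idm idm = idm"
  unfolding kr_def idm_def by (auto simp: fun_eq_iff) (metis div_mod_decomp)

lemma adj_kr: "adj 4 (kr A B) = kr (adj 2 A) (adj 2 B)"
  unfolding adj_def kr_def by (simp add: fun_eq_iff)

lemma kr_GL: "A \<in> GL 2 \<Longrightarrow> B \<in> GL 2 \<Longrightarrow> kr A B \<in> GL 4"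
proof -
  assume A: "A \<in> GL 2" and B: "B \<in> GL 2"
  obtain A' where A': "\<forall>a<2. \<forall>b<2. mmul 2 A A' a b = idm a b \<and> mmul 2 A' A a b = idm a b"
    using A by (auto simp: GL_def)
  obtain B' where B': "\<forall>a<2. \<forall>b<2. mmul 2 B B' a b = idm a b \<and> mmul 2 B' B a b = idm a b"
    using B by (auto simp: GL_def)
  have "\<forall>a<4. \<forall>b<4. mmul 4 (kr A B) (kr A' B') a b = idm a b \<and> mmul 4 (kr A' B') (kr A B) a b = idm a b"
  proof (intro allI impI)
    fix a b :: nat assume ab: "a < 4" "b < 4"
    then have lt: "a div 2 < 2" "b div 2 < 2" "a mod 2 < 2" "b mod 2 < 2" by auto
    have "kr idm idm a b = idm a b" by (simp add: kr_idm)
    then show "mmul 4 (kr A B) (kr A' B') a b = idm a b \<and> mmul 4 (kr A' B') (kr A B) a b = idm a b"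
      using A' B' lt by (simp add: mmul_kr) (simp add: kr_def)
  qed
  then show ?thesis unfolding GL_def by blast
qed

lemma map_div_Bas: "ys \<in> Bas n 4 \<Longrightarrow> map (\<lambda>a. a div 2) ys \<in> Bas n 2"
  by (auto simp: Bas_def)
lemma map_mod_Bas: "ys \<in> Bas n 4 \<Longrightarrow> map (\<lambda>a. a mod 2) ys \<in> Bas n 2"
  by (auto simp: Bas_def)

lemma sum_Bas4:
  fixes F :: "nat list \<Rightarrow> nat list \<Rightarrow> 'a::comm_monoid_add"
  shows "(\<Sum>xs\<in>Bas n 4. F (map (\<lambda>a. a div 2) xs) (map (\<lambda>a. a mod 2) xs)) = (\<Sum>p\<in>Bas n 2. \<Sum>q\<in>Bas n 2. F p q)"
proof (induction n arbitrary: F)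
  case 0
  then show ?case by simp
next
  case (Suc n)
  have "(\<Sum>xs\<in>Bas (Suc n) 4. F (map (\<lambda>a. a div 2) xs) (map (\<lambda>a. a mod 2) xs))
      = (\<Sum>x<4. \<Sum>p\<in>Bas n 2. \<Sum>q\<in>Bas n 2. F (x div 2 # p) (x mod 2 # q))"
    by (simp add: sum_Bas_Suc Suc[of "\<lambda>p q. F (_ # p) (_ # q)"])
  also have "\<dots> = (\<Sum>p\<in>Bas (Suc n) 2. \<Sum>q\<in>Bas (Suc n) 2. F p q)"
    by (simp add: sum_Bas_Suc sum4 sum2 sum.distrib add_ac)
  finally show ?case .
qed

lemma two_copy_norm: "vnorm n 4 (two_copy n phi chi) = vnorm n 2 phi * vnorm n 2 chi"
proof -
  have "(\<Sum>ys\<in>Bas n 4. (cmod (two_copy n phi chi ys))\<^sup>2)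
      = (\<Sum>ys\<in>Bas n 4. (\<lambda>p q. (cmod (phi p))\<^sup>2 * (cmod (chi q))\<^sup>2) (map (\<lambda>a. a div 2) ys) (map (\<lambda>a. a mod 2) ys))"
    by (rule sum.cong) (auto simp: two_copy_def norm_mult power_mult_distrib)
  also have "\<dots> = (\<Sum>p\<in>Bas n 2. \<Sum>q\<in>Bas n 2. (cmod (phi p))\<^sup>2 * (cmod (chi q))\<^sup>2)"
    by (rule sum_Bas4)
  also have "\<dots> = (\<Sum>p\<in>Bas n 2. (cmod (phi p))\<^sup>2) * (\<Sum>q\<in>Bas n 2. (cmod (chi q))\<^sup>2)"
    by (simp add: sum_product)
  finally show ?thesis unfolding vnorm_def by (simp add: real_sqrt_mult)
qed

lemma two_copy_kron:
  "prod_apply n 4 (\<lambda>i. kr (A i) (B i)) (two_copy n phi chi)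
     = two_copy n (prod_apply n 2 A phi) (prod_apply n 2 B chi)"
proof (rule ext)
  fix ys
  show "prod_apply n 4 (\<lambda>i. kr (A i) (B i)) (two_copy n phi chi) ys
     = two_copy n (prod_apply n 2 A phi) (prod_apply n 2 B chi) ys"
  proof (cases "ys \<in> Bas n 4")
    case True
    define Yd where "Yd = map (\<lambda>a. a div 2) ys"
    define Ym where "Ym = map (\<lambda>a. a mod 2) ys"
    have Yb: "Yd \<in> Bas n 2" "Ym \<in> Bas n 2" using True by (auto simp: Yd_def Ym_def map_div_Bas map_mod_Bas)
    define F where "F p q = ((\<Prod>i<n. A i (Yd!i) (p!i)) * phi p) * ((\<Prod>i<n. B i (Ym!i) (q!i)) * chi q)" for p q
    have "prod_apply n 4 (\<lambda>i. kr (A i) (B i)) (two_copy n phi chi) ys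
        = (\<Sum>xs\<in>Bas n 4. F (map (\<lambda>a. a div 2) xs) (map (\<lambda>a. a mod 2) xs))"
      unfolding prod_apply_def using True
    proof (simp, intro sum.cong refl)
      fix xs assume xs: "xs \<in> Bas n 4"
      have len: "length xs = n" "length ys = n" using xs True by (auto simp: Bas_def)
      have "(\<Prod>i<n. kr (A i) (B i) (ys ! i) (xs ! i))
          = (\<Prod>i<n. A i (Yd!i) ((map (\<lambda>a. a div 2) xs)!i)) * (\<Prod>i<n. B i (Ym!i) ((map (\<lambda>a. a mod 2) xs)!i))"
        unfolding prod.distrib[symmetric] using len by (intro prod.cong) (auto simp: kr_def Yd_def Ym_def)
      then show "(\<Prod>i<n. kr (A i) (B i) (ys ! i) (xs ! i)) * two_copy n phi chi xs
          = F (map (\<lambda>a. a div 2) xs) (map (\<lambda>a. a mod 2) xs)"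
        using xs by (simp add: two_copy_def F_def mult_ac)
    qed
    also have "\<dots> = (\<Sum>p\<in>Bas n 2. \<Sum>q\<in>Bas n 2. F p q)" by (rule sum_Bas4)
    also have "\<dots> = prod_apply n 2 A phi Yd * prod_apply n 2 B chi Ym"
      using Yb by (simp add: F_def prod_apply_def sum_product)
    also have "\<dots> = two_copy n (prod_apply n 2 A phi) (prod_apply n 2 B chi) ys"
      using True by (simp add: two_copy_def Yd_def Ym_def)
    finally show ?thesis .
  qed (simp add: prod_apply_def two_copy_def)
qed

lemma qform_diag:
  fixes A :: lmat and D :: "nat \<Rightarrow> real"
  assumes H: "\<And>b b'. b < d \<Longrightarrow> b' < d \<Longrightarrow> mmul d (adj d A) A b b' = (if b = b' then complex_of_real (D b) else 0)"
  shows "(\<Sum>a<d. (cmod (\<Sum>b<d. A a b * v b))\<^sup>2) = (\<Sum>b<d. D b * (cmod (v b))\<^sup>2)"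
proof -
  have "complex_of_real (\<Sum>a<d. (cmod (\<Sum>b<d. A a b * v b))\<^sup>2)
      = (\<Sum>a<d. (\<Sum>b<d. A a b * v b) * (\<Sum>b'<d. cnj (A a b') * cnj (v b')))"
    by (simp only: of_real_sum complex_norm_square cnj_sum complex_cnj_mult)
  also have "\<dots> = (\<Sum>a<d. \<Sum>b<d. \<Sum>b'<d. v b * cnj (v b') * (cnj (A a b') * A a b))"
    by (simp add: sum_product mult_ac)
  also have "\<dots> = (\<Sum>b<d. \<Sum>a<d. \<Sum>b'<d. v b * cnj (v b') * (cnj (A a b') * A a b))"
    by (rule sum.swap)
  also have "\<dots> = (\<Sum>b<d. \<Sum>b'<d. \<Sum>a<d. v b * cnj (v b') * (cnj (A a b') * A a b))"
    by (rule sum.cong[OF refl]) (rule sum.swap)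
  also have "\<dots> = (\<Sum>b<d. \<Sum>b'<d. v b * cnj (v b') * mmul d (adj d A) A b' b)"
    by (simp add: mmul_def adj_def sum_distrib_left)
  also have "\<dots> = (\<Sum>b<d. \<Sum>b'<d. if b' = b then v b * cnj (v b') * complex_of_real (D b) else 0)"
    using H by (intro sum.cong refl) auto
  also have "\<dots> = (\<Sum>b<d. v b * cnj (v b) * complex_of_real (D b))"
    by (simp add: sum.delta)
  also have "\<dots> = complex_of_real (\<Sum>b<d. D b * (cmod (v b))\<^sup>2)"
    by (simp only: of_real_sum of_real_mult complex_norm_square) (simp add: mult_ac)
  finally show ?thesis using of_real_eq_iff by blast
qed

lemma colsum_diag:
  fixes A :: lmat and D :: "nat \<Rightarrow> real"
  assumes H: "mmul d (adj d A) A b b = complex_of_real Db"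
  shows "(\<Sum>a<d. (cmod (A a b))\<^sup>2) = Db"
proof -
  have "complex_of_real (\<Sum>a<d. (cmod (A a b))\<^sup>2) = (\<Sum>a<d. cnj (A a b) * A a b)"
    by (simp only: of_real_sum complex_norm_square) (simp add: mult.commute)
  also have "\<dots> = complex_of_real Db" using H by (simp add: mmul_def adj_def)
  finally show ?thesis using of_real_eq_iff by blast
qed



lemma sum_Bas_dec:
  assumes p: "p < n" and d: "0 < d"
  shows "(\<Sum>ys\<in>Bas n d. F ys) = (\<Sum>zs\<in>{zs\<in>Bas n d. zs!p = 0}. \<Sum>a<d. F (zs[p:=a]))"
proof -
  define Z where "Z = {zs\<in>Bas n d. zs!p = 0}"
  define g where "g = (\<lambda>(zs::nat list, a::nat). zs[p:=a])"
  have inj: "inj_on g (Z \<times> {..<d})"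
  proof (rule inj_onI)
    fix x y assume h0: "x \<in> Z \<times> {..<d}" "y \<in> Z \<times> {..<d}" "g x = g y"
    obtain zs a where x: "x = (zs, a)" by (cases x)
    obtain zs' a' where y: "y = (zs', a')" by (cases y)
    have h: "(zs, a) \<in> Z \<times> {..<d}" "(zs', a') \<in> Z \<times> {..<d}" "g (zs, a) = g (zs', a')"
      using h0 x y by auto
    have len: "length zs = n" "length zs' = n" using h by (auto simp: Z_def Bas_def)
    have e: "zs[p:=a] = zs'[p:=a']" using h(3) by (simp add: g_def)
    have "a = a'" using arg_cong[OF e, of "\<lambda>l. l!p"] len p by simp
    moreover have "zs = zs'"
    proof -
      have z0: "zs!p = 0" "zs'!p = 0" using h(1,2) by (auto simp: Z_def)
      have "zs = (zs[p:=a])[p:=0]" by (metis z0(1) list_update_id list_update_overwrite)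
      also have "\<dots> = (zs'[p:=a'])[p:=0]" using e by simp
      also have "\<dots> = zs'" by (metis z0(2) list_update_id list_update_overwrite)
      finally show ?thesis .
    qed
    ultimately show "x = y" using x y by simp
  qed
  have img: "g ` (Z \<times> {..<d}) = Bas n d"
  proof
    show "g ` (Z \<times> {..<d}) \<subseteq> Bas n d" by (auto simp: g_def Z_def intro: Bas_upd)
    show "Bas n d \<subseteq> g ` (Z \<times> {..<d})"
    proof
      fix ys assume ys: "ys \<in> Bas n d"
      have "ys[p:=0] \<in> Bas n d" using ys d by (rule Bas_upd)
      then have "ys[p:=0] \<in> Z" using ys p by (auto simp: Z_def Bas_mem)
      moreover have "ys!p < d" using ys p by (simp add: Bas_mem)
      moreover have "ys = g (ys[p:=0], ys!p)" by (simp add: g_def)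
      ultimately show "ys \<in> g ` (Z \<times> {..<d})" by blast
    qed
  qed
  have "(\<Sum>ys\<in>Bas n d. F ys) = (\<Sum>x\<in>Z \<times> {..<d}. F (g x))"
    by (subst img[symmetric]) (rule sum.reindex[OF inj, unfolded comp_def])
  also have "\<dots> = (\<Sum>zs\<in>Z. \<Sum>a<d. F (zs[p:=a]))"
    by (simp add: g_def sum.cartesian_product case_prod_beta)
  finally show ?thesis by (simp add: Z_def)
qed

lemma sum_list_sum_swap: "(\<Sum>A\<leftarrow>As. \<Sum>z\<in>Z. f A z) = (\<Sum>z\<in>Z. \<Sum>A\<leftarrow>As. (f A z :: real))"
  by (induction As) (auto simp: sum.distrib)

lemma sum_list_concat_map: "sum_list (map f (concat xss)) = sum_list (map (\<lambda>xs. sum_list (map f xs)) xss)"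
  by (induction xss) auto

lemma local_sep:
  assumes p: "p < n" and d: "0 < d" and LI: "local_instr d As"
  shows "(\<Sum>A\<leftarrow>As. (vnorm n d (prod_apply n d (\<lambda>i. if i = p then A else idm) v))\<^sup>2) \<le> (vnorm n d v)\<^sup>2"
proof -
  define Z where "Z = {zs\<in>Bas n d. zs!p = 0}"
  have Zb: "zs[p:=a] \<in> Bas n d" if "zs \<in> Z" "a < d" for zs a using that by (auto simp: Z_def intro: Bas_upd)
  have lenZ: "length zs = n" if "zs \<in> Z" for zs using that by (auto simp: Z_def Bas_def)
  have one: "(vnorm n d (prod_apply n d (\<lambda>i. if i = p then A else idm) v))\<^sup>2
      = (\<Sum>zs\<in>Z. \<Sum>a<d. (cmod (\<Sum>b<d. A a b * v (zs[p:=b])))\<^sup>2)" for A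
  proof -
    have "(vnorm n d (prod_apply n d (\<lambda>i. if i = p then A else idm) v))\<^sup>2
        = (\<Sum>zs\<in>Z. \<Sum>a<d. (cmod (prod_apply n d (\<lambda>i. if i = p then A else idm) v (zs[p:=a])))\<^sup>2)"
      unfolding vnorm_sq Z_def by (rule sum_Bas_dec[OF p d])
    also have "\<dots> = (\<Sum>zs\<in>Z. \<Sum>a<d. (cmod (\<Sum>b<d. A a b * v (zs[p:=b])))\<^sup>2)"
      using Zb lenZ p by (intro sum.cong refl) (simp add: prod_apply_single)
    finally show ?thesis .
  qed
  have "(\<Sum>A\<leftarrow>As. (vnorm n d (prod_apply n d (\<lambda>i. if i = p then A else idm) v))\<^sup>2)
      = (\<Sum>zs\<in>Z. \<Sum>A\<leftarrow>As. \<Sum>a<d. (cmod (\<Sum>b<d. A a b * v (zs[p:=b])))\<^sup>2)"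
    by (simp add: one sum_list_sum_swap)
  also have "\<dots> \<le> (\<Sum>zs\<in>Z. \<Sum>a<d. (cmod (v (zs[p:=a])))\<^sup>2)"
  proof (rule sum_mono)
    fix zs assume "zs \<in> Z"
    show "(\<Sum>A\<leftarrow>As. \<Sum>a<d. (cmod (\<Sum>b<d. A a b * v (zs[p:=b])))\<^sup>2) \<le> (\<Sum>a<d. (cmod (v (zs[p:=a])))\<^sup>2)"
      using LI[unfolded local_instr_def, rule_format, of "\<lambda>b. v (zs[p:=b])"] by simp
  qed
  also have "\<dots> = (vnorm n d v)\<^sup>2"
    unfolding vnorm_sq Z_def by (rule sum_Bas_dec[OF p d, symmetric])
  finally show ?thesis .
qed

lemma LOCC_sep:
  assumes "LOCC n d Ms" and d: "0 < d"
  shows "sep_op n d Ms"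
  using assms(1)
proof (induction rule: LOCC.induct)
  case LOCC_id
  show ?case unfolding sep_op_def
    by (simp add: prod_apply_id vnorm_cong[of n d "\<lambda>ys. if ys \<in> Bas n d then _ ys else 0"])
next
  case (LOCC_local p As)
  then show ?case unfolding sep_op_def using local_sep[OF _ d] by (simp add: comp_def)
next
  case (LOCC_comp Ks Ls)
  have IH1: "sep_op n d Ks" using LOCC_comp by blast
  have IH2: "\<forall>k<length Ks. sep_op n d (Ls k)" using LOCC_comp by blast
  show ?case unfolding sep_op_def
  proof
    fix v
    have "(\<Sum>M\<leftarrow>concat (map (\<lambda>k. map (\<lambda>L i. mmul d (L i) ((Ks ! k) i)) (Ls k)) [0..<length Ks]).
             (vnorm n d (prod_apply n d M v))\<^sup>2)
        = (\<Sum>k\<leftarrow>[0..<length Ks]. \<Sum>L\<leftarrow>Ls k. (vnorm n d (prod_apply n d L (prod_apply n d (Ks!k) v)))\<^sup>2)"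
      by (simp add: sum_list_concat_map comp_def prod_apply_comp)
    also have "\<dots> \<le> (\<Sum>k\<leftarrow>[0..<length Ks]. (vnorm n d (prod_apply n d (Ks!k) v))\<^sup>2)"
      using IH2 unfolding sep_op_def by (intro sum_list_mono) auto
    also have "\<dots> = (\<Sum>K\<leftarrow>Ks. (vnorm n d (prod_apply n d K v))\<^sup>2)"
    proof -
      have "map (\<lambda>k. (vnorm n d (prod_apply n d (Ks!k) v))\<^sup>2) [0..<length Ks]
          = map (\<lambda>K. (vnorm n d (prod_apply n d K v))\<^sup>2) (map (\<lambda>k. Ks!k) [0..<length Ks])"
        by simp
      then show ?thesis by (simp add: map_nth)
    qed
    also have "\<dots> \<le> (vnorm n d v)\<^sup>2" using IH1 unfolding sep_op_def by blast
    finally show "(\<Sum>M\<leftarrow>concat (map (\<lambda>k. map (\<lambda>L i. mmul d (L i) ((Ks ! k) i)) (Ls k)) [0..<length Ks]).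
             (vnorm n d (prod_apply n d M v))\<^sup>2) \<le> (vnorm n d v)\<^sup>2" .
  qed
qed



lemma stab_cases:
  assumes stab: "stabilizer n 4 Phi = {prod_apply n 4 (\<lambda>i. idm), prod_apply n 4 (\<lambda>i. swap4)}"
    and S: "\<forall>i<n. S i \<in> GL 4" "prod_apply n 4 S Phi = Phi"
  shows "prod_apply n 4 S = prod_apply n 4 (\<lambda>i. idm) \<or> prod_apply n 4 S = prod_apply n 4 (\<lambda>i. swap4)"
proof -
  have "prod_apply n 4 S \<in> stabilizer n 4 Phi" using S unfolding stabilizer_def by blast
  then show ?thesis using stab by auto
qed

lemma stab_swap:
  assumes stab: "stabilizer n 4 Phi = {prod_apply n 4 (\<lambda>i. idm), prod_apply n 4 (\<lambda>i. swap4)}"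
  shows "prod_apply n 4 (\<lambda>i. swap4) Phi = Phi"
proof -
  have "prod_apply n 4 (\<lambda>i. swap4) \<in> stabilizer n 4 Phi" using stab by auto
  then obtain S where "prod_apply n 4 (\<lambda>i. swap4) = prod_apply n 4 S" "prod_apply n 4 S Phi = Phi"
    unfolding stabilizer_def by blast
  then show ?thesis by simp
qed

lemma GL_single: "A \<in> GL d \<Longrightarrow> \<forall>j<n. (if j = i then A else idm) \<in> GL d"
  by (auto intro: idm_GL)

lemma id_as_single: "(\<lambda>j::nat. if j = i then idm else idm) = (\<lambda>j. idm)" by simp

lemma flr_Phi:
  assumes stab: "stabilizer n 4 Phi = {prod_apply n 4 (\<lambda>i. idm), prod_apply n 4 (\<lambda>i. swap4)}"
    and vout: "\<forall>xs. xs \<notin> Bas n 4 \<longrightarrow> Phi xs = 0"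
    and i: "i < n"
  shows "flr n 4 Phi i"
  unfolding flr_def
proof (intro allI impI, rule ccontr)
  fix w a0 assume annih: "\<forall>ys\<in>Bas n 4. (\<Sum>a<4. w a * Phi (ys[i:=a])) = 0"
    and a0: "a0 < 4" "w a0 \<noteq> 0"
  define S where "S t = (\<lambda>j. if j = i then (\<lambda>a b. idm a b + complex_of_real t * r1E 4 w a b) else idm)" for t :: real
  have St: "prod_apply n 4 (S t) = prod_apply n 4 (\<lambda>i. idm) \<or> prod_apply n 4 (S t) = prod_apply n 4 (\<lambda>i. swap4)"
    if t: "t \<ge> 0" for t
  proof (rule stab_cases[OF stab])
    have r: "(\<lambda>a b. idm a b + complex_of_real t * r1E 4 w a b) \<in> GL 4"
         "prod_apply n 4 (S t) Phi = Phi"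
      using rank1_stab[OF i a0 annih vout t] by (simp_all add: S_def)
    show "\<forall>i<n. S t i \<in> GL 4" using r(1) by (auto simp: S_def intro: idm_GL)
    show "prod_apply n 4 (S t) Phi = Phi" by (rule r(2))
  qed
  have E0: "r1E 4 w a0 a0 \<noteq> 0" using rank1_stab[OF i a0 annih vout order_refl] by simp
  have notid: "prod_apply n 4 (S t) \<noteq> prod_apply n 4 (\<lambda>i. idm)" if "t > 0" for t
  proof
    assume h: "prod_apply n 4 (S t) = prod_apply n 4 (\<lambda>i. idm)"
    have "idm a0 a0 + complex_of_real t * r1E 4 w a0 a0 = idm a0 a0"
      using single_eq_entries[OF i a0(1) a0(1), of "\<lambda>a b. idm a b + complex_of_real t * r1E 4 w a b" idm]
        h by (simp add: S_def)
    then show False using E0 that by simp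
  qed
  have "prod_apply n 4 (S 1) = prod_apply n 4 (\<lambda>i. swap4)" using St[of 1] notid[of 1] by auto
  moreover have "prod_apply n 4 (S 2) = prod_apply n 4 (\<lambda>i. swap4)" using St[of 2] notid[of 2] by auto
  ultimately have "prod_apply n 4 (S 1) = prod_apply n 4 (S 2)" by simp
  then have "idm a0 a0 + complex_of_real 1 * r1E 4 w a0 a0 = idm a0 a0 + complex_of_real 2 * r1E 4 w a0 a0"
    using single_eq_entries[OF i a0(1) a0(1), of "\<lambda>a b. idm a b + complex_of_real 1 * r1E 4 w a b"
          "\<lambda>a b. idm a b + complex_of_real 2 * r1E 4 w a b"] by (simp add: S_def)
  then show False using E0 by simp
qed

lemma two_copy_out: "xs \<notin> Bas n 4 \<Longrightarrow> two_copy n phi chi xs = 0"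
  by (simp add: two_copy_def)

lemma ST1:
  assumes stab: "stabilizer n 4 (two_copy n psi psi) = {prod_apply n 4 (\<lambda>i. idm), prod_apply n 4 (\<lambda>i. swap4)}"
    and supp: "\<forall>xs. xs \<notin> Bas n 2 \<longrightarrow> psi xs = 0"
    and n: "0 < n"
    and S: "\<forall>i<n. S i \<in> GL 2" "prod_apply n 2 S psi = psi"
  shows "\<forall>v. \<forall>ys\<in>Bas n 2. prod_apply n 2 S v ys = v ys"
proof -
  define K where "K = (\<lambda>i. kr (S i) idm)"
  have KGL: "\<forall>i<n. K i \<in> GL 4" using S(1) by (auto simp: K_def intro: kr_GL idm_GL)
  have rpsi: "prod_apply n 2 (\<lambda>i. idm) psi = psi"
    using supp by (auto simp: prod_apply_id fun_eq_iff)
  have KPhi: "prod_apply n 4 K (two_copy n psi psi) = two_copy n psi psi"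
    unfolding K_def two_copy_kron using S(2) rpsi by simp
  have cases: "prod_apply n 4 K = prod_apply n 4 (\<lambda>i. idm) \<or> prod_apply n 4 K = prod_apply n 4 (\<lambda>i. swap4)"
    by (rule stab_cases[OF stab KGL KPhi])
  define x0 where "x0 = replicate n (0::nat)"
  define x1 where "x1 = x0[0:=1]"
  have x0B: "x0 \<in> Bas n 4" "x0 \<in> Bas n 2" by (auto simp: x0_def Bas_def)
  have x1B: "x1 \<in> Bas n 4" unfolding x1_def by (rule Bas_upd[OF x0B(1)]) simp
  have notswap: "prod_apply n 4 K \<noteq> prod_apply n 4 (\<lambda>i. swap4)"
  proof
    assume h: "prod_apply n 4 K = prod_apply n 4 (\<lambda>i. swap4)"
    have e0: "(\<Prod>j<n. K j (x0!j) (x0!j)) = (\<Prod>j<n. swap4 (x0!j) (x0!j))"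
      using h prod_apply_delta[OF x0B(1) x0B(1), of K] prod_apply_delta[OF x0B(1) x0B(1), of "\<lambda>i. swap4"]
      by simp
    have e1: "(\<Prod>j<n. K j (x1!j) (x1!j)) = (\<Prod>j<n. swap4 (x1!j) (x1!j))"
      using h prod_apply_delta[OF x1B x1B, of K] prod_apply_delta[OF x1B x1B, of "\<lambda>i. swap4"]
      by simp
    have "(\<Prod>j<n. K j (x1!j) (x1!j)) = (\<Prod>j<n. K j (x0!j) (x0!j))"
    proof (rule prod.cong[OF refl])
      fix j assume "j \<in> {..<n}"
      then show "K j (x1!j) (x1!j) = K j (x0!j) (x0!j)"
        by (cases "j = 0") (auto simp: x1_def x0_def K_def kr_def idm_def nth_list_update)
    qed
    moreover have "(\<Prod>j<n. swap4 (x0!j) (x0!j)) = 1" by (simp add: x0_def swap4_def)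
    moreover have "(\<Prod>j<n. swap4 (x1!j) (x1!j)) = 0"
    proof -
      have "swap4 (x1!0) (x1!0) = 0" using n by (simp add: x1_def x0_def swap4_def)
      then show ?thesis using n by (intro prod_zero) auto
    qed
    ultimately show False using e0 e1 by simp
  qed
  then have Kid: "prod_apply n 4 K = prod_apply n 4 (\<lambda>i. idm)" using cases by blast
  show ?thesis
  proof (intro allI ballI)
    fix v ys assume ys: "ys \<in> Bas n 2"
    define chi where "chi = (\<lambda>zs. if zs = x0 then (1::complex) else 0)"
    have "two_copy n (prod_apply n 2 S v) (prod_apply n 2 (\<lambda>i. idm) chi) = prod_apply n 4 K (two_copy n v chi)"
      unfolding K_def two_copy_kron ..
    also have "\<dots> = two_copy n v chi"
      by (simp add: Kid prod_apply_id fun_eq_iff two_copy_out)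
    finally have eq: "two_copy n (prod_apply n 2 S v) (prod_apply n 2 (\<lambda>i. idm) chi) = two_copy n v chi" .
    define zs where "zs = map (\<lambda>a. 2 * a) ys"
    have zsB: "zs \<in> Bas n 4" using ys by (auto simp: zs_def Bas_def)
    have zd: "map (\<lambda>a. a div 2) zs = ys" by (simp add: zs_def comp_def)
    have zm: "map (\<lambda>a. a mod 2) zs = x0" using ys by (simp add: zs_def comp_def x0_def Bas_def map_replicate_const)
    have "prod_apply n 2 S v ys * prod_apply n 2 (\<lambda>i. idm) chi x0 = v ys * chi x0"
      using fun_cong[OF eq, of zs] zsB zd zm by (simp add: two_copy_def)
    then show "prod_apply n 2 S v ys = v ys" using x0B(2) by (simp add: prod_apply_id chi_def)
  qed
qed

lemma flr_psi:
  assumes st1: "\<forall>S. (\<forall>i<n. S i \<in> GL 2) \<and> prod_apply n 2 S psi = psi \<longrightarrow> (\<forall>v. \<forall>ys\<in>Bas n 2. prod_apply n 2 S v ys = v ys)"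
    and vout: "\<forall>xs. xs \<notin> Bas n 2 \<longrightarrow> psi xs = 0"
    and i: "i < n"
  shows "flr n 2 psi i"
  unfolding flr_def
proof (intro allI impI, rule ccontr)
  fix w a0 assume annih: "\<forall>ys\<in>Bas n 2. (\<Sum>a<2. w a * psi (ys[i:=a])) = 0"
    and a0: "a0 < 2" "w a0 \<noteq> 0"
  define S where "S = (\<lambda>j. if j = i then (\<lambda>a b. idm a b + complex_of_real 1 * r1E 2 w a b) else idm)"
  have r: "(\<lambda>a b. idm a b + complex_of_real 1 * r1E 2 w a b) \<in> GL 2"
       "prod_apply n 2 S psi = psi" "r1E 2 w a0 a0 \<noteq> 0"
    using rank1_stab[OF i a0 annih vout, of 1] by (simp_all add: S_def)
  have "\<forall>i<n. S i \<in> GL 2" using r(1) by (auto simp: S_def intro: idm_GL)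
  then have triv: "\<forall>v. \<forall>ys\<in>Bas n 2. prod_apply n 2 S v ys = v ys" using st1 r(2) by blast
  define z where "z = (replicate n (0::nat))[i:=a0]"
  have zB: "z \<in> Bas n 2" unfolding z_def using a0 by (intro Bas_upd) (auto simp: Bas_def)
  have "prod_apply n 2 S (\<lambda>zs. if zs = z then 1 else 0) z = idm a0 a0 + complex_of_real 1 * r1E 2 w a0 a0"
    unfolding S_def z_def by (rule single_entry[OF i a0(1) a0(1)])
  moreover have "prod_apply n 2 S (\<lambda>zs. if zs = z then 1 else 0) z = 1" using triv zB by simp
  ultimately show False using r(3) by (simp add: idm_def)
qed



lemma sum_list_filter: "sum_list (map g (filter P xs)) = sum_list (map (\<lambda>x. if P x then g x else 0) xs)"
  by (induction xs) auto

lemma vnorm_zero_fun: "vnorm n d (\<lambda>ys. 0) = 0" by (simp add: vnorm_def)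

lemma colnorm_last:
  assumes n: "0 < n" and e: "e < d"
    and others: "\<forall>j<n-1. (\<Sum>a<d. (cmod (A j a 0))\<^sup>2) = 1"
  shows "(vnorm n d (prod_apply n d A (\<lambda>zs. if zs = replicate (n-1) 0 @ [e] then 1 else 0)))\<^sup>2
       = (\<Sum>a<d. (cmod (A (n-1) a e))\<^sup>2)"
proof -
  obtain m where m: "n = Suc m" using n by (cases n) auto
  define x where "x = replicate (n-1) 0 @ [e]"
  have xB: "x \<in> Bas n d" using e m by (auto simp: x_def Bas_def)
  have "(vnorm n d (prod_apply n d A (\<lambda>zs. if zs = x then 1 else 0)))\<^sup>2
       = (\<Prod>j<n. \<Sum>a<d. (cmod (A j a (x!j)))\<^sup>2)" by (rule colnorm[OF xB])
  also have "\<dots> = (\<Prod>j<m. \<Sum>a<d. (cmod (A j a (x!j)))\<^sup>2) * (\<Sum>a<d. (cmod (A m a (x!m)))\<^sup>2)"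
    by (simp add: m)
  also have "(\<Prod>j<m. \<Sum>a<d. (cmod (A j a (x!j)))\<^sup>2) = 1"
  proof (rule prod.neutral, rule ballI)
    fix j assume "j \<in> {..<m}"
    then show "(\<Sum>a<d. (cmod (A j a (x!j)))\<^sup>2) = 1" using others m by (simp add: x_def nth_append)
  qed
  also have "x!m = e" by (simp add: x_def m nth_append)
  finally show ?thesis by (simp add: x_def m)
qed

lemma idm_col: "0 < d \<Longrightarrow> (\<Sum>a<d. (cmod (idm a 0))\<^sup>2) = 1"
proof -
  assume d: "0 < d"
  have "(\<Sum>a<d. (cmod (idm a 0))\<^sup>2) = (\<Sum>a<d. if a = 0 then 1 else 0)" by (rule sum.cong) (auto simp: idm_def)
  then show ?thesis using d by (simp add: sum.delta')
qed

lemma vnorm_delta: "x \<in> Bas n d \<Longrightarrow> vnorm n d (\<lambda>zs. if zs = x then 1 else 0) = 1"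
proof -
  assume x: "x \<in> Bas n d"
  have "(\<Sum>ys\<in>Bas n d. (cmod (if ys = x then 1 else 0))\<^sup>2) = (\<Sum>ys\<in>Bas n d. if ys = x then 1 else 0)"
    by (rule sum.cong) auto
  then show ?thesis using x unfolding vnorm_def by (simp add: sum.delta')
qed

lemma UB1:
  fixes h :: lmat and psi :: vec and e :: nat and nn :: real
  assumes n: "0 < n" and fl: "\<forall>i<n. flr n 2 psi i" and supp: "\<forall>xs. xs \<notin> Bas n 2 \<longrightarrow> psi xs = 0"
    and st1: "\<forall>S. (\<forall>i<n. S i \<in> GL 2) \<and> prod_apply n 2 S psi = psi \<longrightarrow> (\<forall>v. \<forall>ys\<in>Bas n 2. prod_apply n 2 S v ys = v ys)"
    and h: "h \<in> GL 2" and e: "e < 2" and He: "(\<Sum>a<2. (cmod (h a e))\<^sup>2) = 1"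
    and nn: "nn = vnorm n 2 (prod_apply n 2 (\<lambda>i. if i = n-1 then h else idm) psi)" and nnpos: "nn > 0"
    and Ms: "sep_op n 2 Ms"
  shows "succ_prob n 2 Ms psi (\<lambda>ys. prod_apply n 2 (\<lambda>i. if i = n-1 then h else idm) psi ys / complex_of_real nn) \<le> nn\<^sup>2"
proof -
  define G where "G = (\<lambda>i::nat. if i = n-1 then h else idm)"
  define P where "P = prod_apply n 2 G psi"
  define b where "b = (\<lambda>ys. P ys / complex_of_real nn)"
  define x where "x = replicate (n-1) (0::nat) @ [e]"
  define dl where "dl = (\<lambda>zs. if zs = x then (1::complex) else 0)"
  have xB: "x \<in> Bas n 2" using e n by (auto simp: x_def Bas_def)
  have Gdl: "(vnorm n 2 (prod_apply n 2 G dl))\<^sup>2 = 1"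
  proof -
    have "(vnorm n 2 (prod_apply n 2 G dl))\<^sup>2 = (\<Sum>a<2. (cmod (G (n-1) a e))\<^sup>2)"
      unfolding dl_def x_def by (rule colnorm_last[OF n e]) (auto simp: G_def idm_col)
    then show ?thesis using He by (simp add: G_def)
  qed
  have claim: "(if proportional n 2 (prod_apply n 2 M psi) b then (vnorm n 2 (prod_apply n 2 M psi))\<^sup>2 else 0)
      \<le> nn\<^sup>2 * (vnorm n 2 (prod_apply n 2 M dl))\<^sup>2" for M
  proof (cases "proportional n 2 (prod_apply n 2 M psi) b")
    case False then show ?thesis by simp
  next
    case True
    then obtain c' where c': "\<forall>ys\<in>Bas n 2. prod_apply n 2 M psi ys = c' * b ys"
      unfolding proportional_def by blast
    show ?thesis
    proof (cases "c' = 0")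
      case True
      have "vnorm n 2 (prod_apply n 2 M psi) = vnorm n 2 (\<lambda>ys. 0)"
        using c' True by (intro vnorm_cong) simp
      then show ?thesis using True by (simp add: vnorm_zero_fun)
    next
      case False
      define c where "c = c' / complex_of_real nn"
      have c0: "c \<noteq> 0" using False nnpos by (simp add: c_def)
      have Mpsi: "prod_apply n 2 M psi = (\<lambda>ys. c * prod_apply n 2 (\<lambda>j. if j = n-1 then h else idm) psi ys)"
      proof (rule ext)
        fix ys show "prod_apply n 2 M psi ys = c * prod_apply n 2 (\<lambda>j. if j = n-1 then h else idm) psi ys"
          using c' by (cases "ys \<in> Bas n 2") (auto simp: b_def P_def G_def c_def prod_apply_out)
      qed
      obtain S where S: "\<forall>i<n. S i \<in> GL 2" "prod_apply n 2 S psi = psi"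
        "\<forall>v. prod_apply n 2 M v = (\<lambda>ys. c * prod_apply n 2 (\<lambda>j. if j = n-1 then h else idm) (prod_apply n 2 S v) ys)"
        using core[OF n fl h supp c0 Mpsi] by blast
      have triv: "\<forall>v. \<forall>ys\<in>Bas n 2. prod_apply n 2 S v ys = v ys" using st1 S(1,2) by blast
      have Mv: "prod_apply n 2 M v = (\<lambda>ys. c * prod_apply n 2 G v ys)" for v
      proof -
        have "prod_apply n 2 G (prod_apply n 2 S v) = prod_apply n 2 G v"
          using triv by (intro prod_apply_vcong) auto
        then show ?thesis using S(3) by (simp add: G_def)
      qed
      have "(vnorm n 2 (prod_apply n 2 M psi))\<^sup>2 = (cmod c)\<^sup>2 * nn\<^sup>2"
        using Mv[of psi] by (simp add: vnorm_smult nn G_def power_mult_distrib)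
      moreover have "(vnorm n 2 (prod_apply n 2 M dl))\<^sup>2 = (cmod c)\<^sup>2"
        using Mv[of dl] Gdl by (simp add: vnorm_smult power_mult_distrib)
      ultimately show ?thesis using True by (simp add: mult_ac)
    qed
  qed
  have "succ_prob n 2 Ms psi b
      = (\<Sum>M\<leftarrow>Ms. if proportional n 2 (prod_apply n 2 M psi) b then (vnorm n 2 (prod_apply n 2 M psi))\<^sup>2 else 0)"
    unfolding succ_prob_def by (rule sum_list_filter)
  also have "\<dots> \<le> (\<Sum>M\<leftarrow>Ms. nn\<^sup>2 * (vnorm n 2 (prod_apply n 2 M dl))\<^sup>2)"
    by (rule sum_list_mono) (rule claim)
  also have "\<dots> = nn\<^sup>2 * (\<Sum>M\<leftarrow>Ms. (vnorm n 2 (prod_apply n 2 M dl))\<^sup>2)"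
    by (simp add: sum_list_const_mult)
  also have "\<dots> \<le> nn\<^sup>2 * (vnorm n 2 dl)\<^sup>2"
    using Ms unfolding sep_op_def by (intro mult_left_mono) auto
  also have "\<dots> = nn\<^sup>2" using xB by (simp add: dl_def vnorm_delta)
  finally show ?thesis by (simp add: b_def P_def G_def)
qed

lemma swap_col0: "(\<Sum>a<4. (cmod (mmul 4 idm swap4 a 0))\<^sup>2) = 1"
proof -
  have "(\<Sum>a<4. (cmod (mmul 4 idm swap4 a 0))\<^sup>2) = (\<Sum>a<4. (cmod (swap4 a 0))\<^sup>2)"
    by (rule sum.cong) (auto simp: mmul_idm_l)
  also have "\<dots> = 1" by (simp add: sum4 swap4_def)
  finally show ?thesis .
qed

lemma mmul_swap1: "mmul 4 K swap4 a (Suc 0) = K a 2" by (simp add: mmul_def sum4 swap4_def)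
lemma mmul_swap2: "mmul 4 K swap4 a 2 = K a 1" by (simp add: mmul_def sum4 swap4_def)

lemma UB2:
  fixes K :: lmat and psi :: vec and eps NN :: real
  assumes n: "0 < n"
    and stab: "stabilizer n 4 (two_copy n psi psi) = {prod_apply n 4 (\<lambda>i. idm), prod_apply n 4 (\<lambda>i. swap4)}"
    and eps: "0 < eps"
    and K: "K \<in> GL 4" and K1: "(\<Sum>a<4. (cmod (K a 1))\<^sup>2) = 1" and K2: "(\<Sum>a<4. (cmod (K a 2))\<^sup>2) = eps\<^sup>2"
    and NN: "NN = vnorm n 4 (prod_apply n 4 (\<lambda>i. if i = n-1 then K else idm) (two_copy n psi psi))"
    and NNpos: "NN > 0"
    and Ms: "sep_op n 4 Ms"
  shows "succ_prob n 4 Ms (two_copy n psi psi)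
     (\<lambda>ys. prod_apply n 4 (\<lambda>i. if i = n-1 then K else idm) (two_copy n psi psi) ys / complex_of_real NN)
     \<le> 2 / (1 + eps\<^sup>2) * NN\<^sup>2"
proof -
  define Phi where "Phi = two_copy n psi psi"
  define G where "G = (\<lambda>i::nat. if i = n-1 then K else idm)"
  define b where "b = (\<lambda>ys. prod_apply n 4 G Phi ys / complex_of_real NN)"
  define x1 where "x1 = replicate (n-1) (0::nat) @ [1]"
  define x2 where "x2 = replicate (n-1) (0::nat) @ [2]"
  define d1 where "d1 = (\<lambda>zs. if zs = x1 then (1::complex) else 0)"
  define d2 where "d2 = (\<lambda>zs. if zs = x2 then (1::complex) else 0)"
  have x1B: "x1 \<in> Bas n 4" using n by (auto simp: x1_def Bas_def)
  have x2B: "x2 \<in> Bas n 4" using n by (auto simp: x2_def Bas_def)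
  have vout: "\<forall>xs. xs \<notin> Bas n 4 \<longrightarrow> Phi xs = 0" by (simp add: Phi_def two_copy_out)
  have fl: "\<forall>i<n. flr n 4 Phi i" using flr_Phi[OF stab[folded Phi_def] vout] by blast
  have Gd1: "(vnorm n 4 (prod_apply n 4 G d1))\<^sup>2 = 1"
  proof -
    have "(vnorm n 4 (prod_apply n 4 G d1))\<^sup>2 = (\<Sum>a<4. (cmod (G (n-1) a 1))\<^sup>2)"
      unfolding d1_def x1_def by (rule colnorm_last[OF n]) (auto simp: G_def idm_col)
    then show ?thesis using K1 by (simp add: G_def)
  qed
  have Gd2: "(vnorm n 4 (prod_apply n 4 G d2))\<^sup>2 = eps\<^sup>2"
  proof -
    have "(vnorm n 4 (prod_apply n 4 G d2))\<^sup>2 = (\<Sum>a<4. (cmod (G (n-1) a 2))\<^sup>2)"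
      unfolding d2_def x2_def by (rule colnorm_last[OF n]) (auto simp: G_def idm_col)
    then show ?thesis using K2 by (simp add: G_def)
  qed
  have GSd1: "(vnorm n 4 (prod_apply n 4 (\<lambda>j. mmul 4 (G j) swap4) d1))\<^sup>2 = eps\<^sup>2"
  proof -
    have "(vnorm n 4 (prod_apply n 4 (\<lambda>j. mmul 4 (G j) swap4) d1))\<^sup>2 = (\<Sum>a<4. (cmod (mmul 4 (G (n-1)) swap4 a 1))\<^sup>2)"
      unfolding d1_def x1_def by (rule colnorm_last[OF n]) (auto simp: G_def swap_col0)
    then show ?thesis using K2 by (simp add: G_def mmul_swap1)
  qed
  have GSd2: "(vnorm n 4 (prod_apply n 4 (\<lambda>j. mmul 4 (G j) swap4) d2))\<^sup>2 = 1"
  proof -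
    have "(vnorm n 4 (prod_apply n 4 (\<lambda>j. mmul 4 (G j) swap4) d2))\<^sup>2 = (\<Sum>a<4. (cmod (mmul 4 (G (n-1)) swap4 a 2))\<^sup>2)"
      unfolding d2_def x2_def by (rule colnorm_last[OF n]) (auto simp: G_def swap_col0)
    then show ?thesis using K1 by (simp add: G_def mmul_swap2)
  qed
  define f where "f M = (if proportional n 4 (prod_apply n 4 M Phi) b then (vnorm n 4 (prod_apply n 4 M Phi))\<^sup>2 else 0)" for M
  have claim: "\<exists>ab. 0 \<le> fst ab \<and> 0 \<le> snd ab \<and> f M = (fst ab + snd ab) * NN\<^sup>2 \<and>
      fst ab + eps\<^sup>2 * snd ab \<le> (vnorm n 4 (prod_apply n 4 M d1))\<^sup>2 \<and>
      eps\<^sup>2 * fst ab + snd ab \<le> (vnorm n 4 (prod_apply n 4 M d2))\<^sup>2" for M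
  proof (cases "proportional n 4 (prod_apply n 4 M Phi) b")
    case False then show ?thesis by (intro exI[of _ "(0,0)"]) (simp add: f_def)
  next
    case True
    then obtain c' where c': "\<forall>ys\<in>Bas n 4. prod_apply n 4 M Phi ys = c' * b ys"
      unfolding proportional_def by blast
    show ?thesis
    proof (cases "c' = 0")
      case True
      have "vnorm n 4 (prod_apply n 4 M Phi) = vnorm n 4 (\<lambda>ys. 0)"
        using c' True by (intro vnorm_cong) simp
      then show ?thesis using True by (intro exI[of _ "(0,0)"]) (simp add: f_def vnorm_zero_fun)
    next
      case False
      define c where "c = c' / complex_of_real NN"
      have c0: "c \<noteq> 0" using False NNpos by (simp add: c_def)
      have MPhi: "prod_apply n 4 M Phi = (\<lambda>ys. c * prod_apply n 4 (\<lambda>j. if j = n-1 then K else idm) Phi ys)"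
      proof (rule ext)
        fix ys show "prod_apply n 4 M Phi ys = c * prod_apply n 4 (\<lambda>j. if j = n-1 then K else idm) Phi ys"
          using c' by (cases "ys \<in> Bas n 4") (auto simp: b_def G_def c_def prod_apply_out)
      qed
      obtain S where S: "\<forall>i<n. S i \<in> GL 4" "prod_apply n 4 S Phi = Phi"
        "\<forall>v. prod_apply n 4 M v = (\<lambda>ys. c * prod_apply n 4 (\<lambda>j. if j = n-1 then K else idm) (prod_apply n 4 S v) ys)"
        using core[OF n fl K vout c0 MPhi] by blast
      have Mv: "prod_apply n 4 M v = (\<lambda>ys. c * prod_apply n 4 G (prod_apply n 4 S v) ys)" for v
        using S(3) by (simp add: G_def)
      have fM: "f M = (cmod c)\<^sup>2 * NN\<^sup>2"
      proof -
        have "f M = (vnorm n 4 (prod_apply n 4 M Phi))\<^sup>2" using True by (simp add: f_def)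
        also have "\<dots> = (cmod c)\<^sup>2 * NN\<^sup>2"
          using Mv[of Phi] S(2) by (simp add: vnorm_smult NN G_def Phi_def power_mult_distrib)
        finally show ?thesis .
      qed
      have cs: "prod_apply n 4 S = prod_apply n 4 (\<lambda>i. idm) \<or> prod_apply n 4 S = prod_apply n 4 (\<lambda>i. swap4)"
        by (rule stab_cases[OF stab[folded Phi_def] S(1,2)])
      then show ?thesis
      proof
        assume Sid: "prod_apply n 4 S = prod_apply n 4 (\<lambda>i. idm)"
        have Mv': "prod_apply n 4 M v = (\<lambda>ys. c * prod_apply n 4 G v ys)" for v
        proof -
          have "prod_apply n 4 G (prod_apply n 4 S v) = prod_apply n 4 G v"
            unfolding Sid by (intro prod_apply_vcong) (simp add: prod_apply_id)
          then show ?thesis using Mv by simp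
        qed
        have "(vnorm n 4 (prod_apply n 4 M d1))\<^sup>2 = (cmod c)\<^sup>2"
          using Gd1 by (simp add: Mv' vnorm_smult power_mult_distrib)
        moreover have "(vnorm n 4 (prod_apply n 4 M d2))\<^sup>2 = (cmod c)\<^sup>2 * eps\<^sup>2"
          using Gd2 by (simp add: Mv' vnorm_smult power_mult_distrib)
        ultimately show ?thesis using fM by (intro exI[of _ "((cmod c)\<^sup>2, 0)"]) (simp add: mult_ac)
      next
        assume Ssw: "prod_apply n 4 S = prod_apply n 4 (\<lambda>i. swap4)"
        have Mv': "prod_apply n 4 M v = (\<lambda>ys. c * prod_apply n 4 (\<lambda>j. mmul 4 (G j) swap4) v ys)" for v
          using Mv by (simp add: Ssw prod_apply_comp)
        have "(vnorm n 4 (prod_apply n 4 M d1))\<^sup>2 = (cmod c)\<^sup>2 * eps\<^sup>2"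
          using GSd1 by (simp add: Mv' vnorm_smult power_mult_distrib)
        moreover have "(vnorm n 4 (prod_apply n 4 M d2))\<^sup>2 = (cmod c)\<^sup>2"
          using GSd2 by (simp add: Mv' vnorm_smult power_mult_distrib)
        ultimately show ?thesis using fM by (intro exI[of _ "(0, (cmod c)\<^sup>2)"]) (simp add: mult_ac)
      qed
    qed
  qed
  then obtain g where g: "\<forall>M. 0 \<le> fst (g M) \<and> 0 \<le> snd (g M) \<and> f M = (fst (g M) + snd (g M)) * NN\<^sup>2 \<and>
      fst (g M) + eps\<^sup>2 * snd (g M) \<le> (vnorm n 4 (prod_apply n 4 M d1))\<^sup>2 \<and>
      eps\<^sup>2 * fst (g M) + snd (g M) \<le> (vnorm n 4 (prod_apply n 4 M d2))\<^sup>2"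
    by metis
  define A where "A = (\<Sum>M\<leftarrow>Ms. fst (g M))"
  define B where "B = (\<Sum>M\<leftarrow>Ms. snd (g M))"
  have s1: "A + eps\<^sup>2 * B \<le> 1"
  proof -
    have "A + eps\<^sup>2 * B = (\<Sum>M\<leftarrow>Ms. fst (g M) + eps\<^sup>2 * snd (g M))"
      by (simp add: A_def B_def sum_list_addf sum_list_const_mult)
    also have "\<dots> \<le> (\<Sum>M\<leftarrow>Ms. (vnorm n 4 (prod_apply n 4 M d1))\<^sup>2)"
      using g by (intro sum_list_mono) blast
    also have "\<dots> \<le> (vnorm n 4 d1)\<^sup>2" using Ms unfolding sep_op_def by blast
    also have "\<dots> = 1" using x1B by (simp add: d1_def vnorm_delta)
    finally show ?thesis .
  qed
  have s2: "eps\<^sup>2 * A + B \<le> 1"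
  proof -
    have "eps\<^sup>2 * A + B = (\<Sum>M\<leftarrow>Ms. eps\<^sup>2 * fst (g M) + snd (g M))"
      by (simp add: A_def B_def sum_list_addf sum_list_const_mult)
    also have "\<dots> \<le> (\<Sum>M\<leftarrow>Ms. (vnorm n 4 (prod_apply n 4 M d2))\<^sup>2)"
      using g by (intro sum_list_mono) blast
    also have "\<dots> \<le> (vnorm n 4 d2)\<^sup>2" using Ms unfolding sep_op_def by blast
    also have "\<dots> = 1" using x2B by (simp add: d2_def vnorm_delta)
    finally show ?thesis .
  qed
  have AB: "A + B \<le> 2 / (1 + eps\<^sup>2)"
  proof -
    have "(1 + eps\<^sup>2) * (A + B) \<le> 2" using s1 s2 by (simp add: algebra_simps)
    moreover have "1 + eps\<^sup>2 > 0" by (simp add: add_pos_nonneg)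
    ultimately show ?thesis by (simp add: field_simps)
  qed
  have "succ_prob n 4 Ms Phi b = (\<Sum>M\<leftarrow>Ms. f M)"
    unfolding succ_prob_def f_def by (rule sum_list_filter)
  also have "\<dots> = (\<Sum>M\<leftarrow>Ms. (fst (g M) + snd (g M)) * NN\<^sup>2)"
    using g by (intro arg_cong[where f=sum_list] map_cong) auto
  also have "\<dots> = (A + B) * NN\<^sup>2"
    by (simp add: A_def B_def sum_list_addf sum_list_const_mult mult.commute[of _ "NN\<^sup>2"])
  also have "\<dots> \<le> 2 / (1 + eps\<^sup>2) * NN\<^sup>2"
    using AB by (intro mult_right_mono) auto
  finally show ?thesis by (simp add: Phi_def b_def G_def)
qed



lemma li_single:
  assumes H: "\<And>b b'. b < d \<Longrightarrow> b' < d \<Longrightarrow> mmul d (adj d A) A b b' = (if b = b' then complex_of_real (D b) else 0)"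
    and D1: "\<And>b. b < d \<Longrightarrow> D b \<le> 1"
  shows "local_instr d [A]"
  unfolding local_instr_def
proof
  fix v :: "nat \<Rightarrow> complex"
  have "(\<Sum>a<d. (cmod (\<Sum>b<d. A a b * v b))\<^sup>2) = (\<Sum>b<d. D b * (cmod (v b))\<^sup>2)"
    by (rule qform_diag[OF H])
  also have "\<dots> \<le> (\<Sum>b<d. (cmod (v b))\<^sup>2)"
  proof (rule sum_mono)
    fix b assume "b \<in> {..<d}"
    then show "D b * (cmod (v b))\<^sup>2 \<le> (cmod (v b))\<^sup>2" using D1[of b] mult_right_mono[of "D b" 1 "(cmod (v b))\<^sup>2"] by simp
  qed
  finally show "(\<Sum>A\<leftarrow>[A]. \<Sum>a<d. (cmod (\<Sum>b<d. A a b * v b))\<^sup>2) \<le> (\<Sum>a<d. (cmod (v a))\<^sup>2)" by simp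
qed

lemma kr_diag:
  assumes H1: "\<forall>a<2. \<forall>b<2. X a b = (if a = b then complex_of_real (f a) else 0)"
    and H2: "\<forall>a<2. \<forall>b<2. Y a b = (if a = b then complex_of_real (g a) else 0)"
    and b: "b < 4" "b' < 4"
  shows "kr X Y b b' = (if b = b' then complex_of_real (f (b div 2) * g (b mod 2)) else 0)"
proof -
  have lt: "b div 2 < 2" "b' div 2 < 2" "b mod 2 < 2" "b' mod 2 < 2" using b by auto
  have "b = b' \<longleftrightarrow> b div 2 = b' div 2 \<and> b mod 2 = b' mod 2" by (metis div_mod_decomp)
  then show ?thesis using H1 H2 lt unfolding kr_def by auto
qed

lemma local_instr_swaps: "local_instr 4 [swap4]"
  unfolding local_instr_def by (simp add: sum4 swap4_def)

lemma LOCC_swaps: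
  assumes "m \<le> n"
  shows "\<exists>P. LOCC n 4 [P] \<and> (\<forall>i<n. \<forall>a<4. \<forall>b<4. P i a b = (if i < m then swap4 else idm) a b)"
  using assms
proof (induction m)
  case 0
  then show ?case using LOCC.LOCC_id[of n 4] by (intro exI[of _ "\<lambda>i. idm"]) auto
next
  case (Suc m)
  then obtain P where P: "LOCC n 4 [P]" "\<forall>i<n. \<forall>a<4. \<forall>b<4. P i a b = (if i < m then swap4 else idm) a b"
    by auto
  have mn: "m < n" using Suc by simp
  define L where "L = (\<lambda>i. if i = m then swap4 else idm)"
  have LL: "LOCC n 4 [L]"
    using LOCC.LOCC_local[OF mn local_instr_swaps] by (simp add: L_def)
  have "LOCC n 4 (concat (map (\<lambda>k. map (\<lambda>L' i. mmul 4 (L' i) (([P] ! k) i)) ((\<lambda>k. [L]) k)) [0..<length [P]]))"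
    by (rule LOCC.LOCC_comp[OF P(1)]) (simp add: LL)
  then have LC: "LOCC n 4 [\<lambda>i. mmul 4 (L i) (P i)]" by simp
  have "(\<lambda>i. mmul 4 (L i) (P i)) i a b = (if i < Suc m then swap4 else idm) a b"
    if "i < n" "a < 4" "b < 4" for i a b
  proof -
    have "mmul 4 (L i) (P i) a b = mmul 4 (L i) (if i < m then swap4 else idm) a b"
      using P(2) that by (intro mmul_cong) auto
    also have "\<dots> = (if i < Suc m then swap4 else idm) a b"
      using that by (auto simp: L_def mmul_idm_l mmul_idm_r)
    finally show ?thesis by simp
  qed
  then show ?case using LC by blast
qed

lemma prod_apply_zero: "prod_apply n d A (\<lambda>ys. 0) = (\<lambda>ys. 0)"
  by (simp add: prod_apply_def fun_eq_iff)

lemma norm_pos_GL: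
  assumes n: "0 < n" and h: "h \<in> GL d" and supp: "\<forall>xs. xs \<notin> Bas n d \<longrightarrow> psi xs = 0"
    and nrm: "vnorm n d psi = 1"
  shows "vnorm n d (prod_apply n d (\<lambda>i. if i = n-1 then h else idm) psi) > 0"
proof (rule ccontr)
  assume "\<not> ?thesis"
  then have z: "vnorm n d (prod_apply n d (\<lambda>i. if i = n-1 then h else idm) psi) = 0"
    using vnorm_nonneg[of n d "prod_apply n d (\<lambda>i. if i = n-1 then h else idm) psi"] by linarith
  obtain hi where hi: "\<forall>a<d. \<forall>b<d. mmul d h hi a b = idm a b \<and> mmul d hi h a b = idm a b"
    using h by (auto simp: GL_def)
  have "prod_apply n d (\<lambda>i. if i = n-1 then hi else idm) (prod_apply n d (\<lambda>i. if i = n-1 then h else idm) psi)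
      = prod_apply n d (\<lambda>i. idm) psi"
    unfolding prod_apply_comp by (rule prod_apply_cong) (auto simp: hi mmul_idm_l)
  also have "\<dots> = psi" using supp by (auto simp: prod_apply_id fun_eq_iff)
  finally have e: "prod_apply n d (\<lambda>i. if i = n-1 then hi else idm) (prod_apply n d (\<lambda>i. if i = n-1 then h else idm) psi) = psi" .
  have "prod_apply n d (\<lambda>i. if i = n-1 then hi else idm) (prod_apply n d (\<lambda>i. if i = n-1 then h else idm) psi)
      = prod_apply n d (\<lambda>i. if i = n-1 then hi else idm) (\<lambda>ys. 0)"
    using vnorm_zero[OF z] by (intro prod_apply_vcong) auto
  then have "psi = (\<lambda>ys. 0)" using e by (simp add: prod_apply_zero)
  then show False using nrm by (simp add: vnorm_zero_fun)
qed

lemma max_succ_eq: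
  assumes ub: "\<And>Ms. sep_op n d Ms \<Longrightarrow> succ_prob n d Ms a b \<le> x"
    and lb: "sep_op n d Ms0" "succ_prob n d Ms0 a b = x"
  shows "max_succ n d a b = x"
  unfolding max_succ_def
  by (rule cSup_eq_maximum) (use ub lb in auto)

lemma succ_prob_cong:
  assumes "length Ms = length Ms'" "\<forall>k<length Ms. prod_apply n d (Ms!k) = prod_apply n d (Ms'!k)"
  shows "succ_prob n d Ms a b = succ_prob n d Ms' a b"
proof -
  have "map (\<lambda>M. if proportional n d (prod_apply n d M a) b then (vnorm n d (prod_apply n d M a))\<^sup>2 else 0) Ms
     = map (\<lambda>M. if proportional n d (prod_apply n d M a) b then (vnorm n d (prod_apply n d M a))\<^sup>2 else 0) Ms'"
    using assms by (intro nth_equalityI) auto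
  then show ?thesis unfolding succ_prob_def sum_list_filter by simp
qed



lemma mmul_swap_vec: "(\<Sum>b<4. mmul 4 K swap4 a b * v b) = (\<Sum>b<4. K a b * v (if b = 1 then 2 else if b = 2 then 1 else b))"
  by (simp add: sum4 mmul_def swap4_def)

lemma LB2:
  fixes K :: lmat and eps NN :: real and Phi :: vec and D :: "nat \<Rightarrow> real"
  assumes n: "0 < n"
    and swPhi: "prod_apply n 4 (\<lambda>i. swap4) Phi = Phi"
    and KD: "\<And>b b'. b < 4 \<Longrightarrow> b' < 4 \<Longrightarrow> mmul 4 (adj 4 K) K b b' = (if b = b' then complex_of_real (D b) else 0)"
    and Dv: "D 0 = eps" "D 1 = 1" "D 2 = eps\<^sup>2" "D 3 = eps" and eps: "0 \<le> eps"
    and NN: "NN = vnorm n 4 (prod_apply n 4 (\<lambda>i. if i = n-1 then K else idm) Phi)" and NNpos: "NN > 0"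
  shows "\<exists>Ms. LOCC n 4 Ms \<and> succ_prob n 4 Ms Phi (\<lambda>ys. prod_apply n 4 (\<lambda>i. if i = n-1 then K else idm) Phi ys / complex_of_real NN)
            = 2 / (1 + eps\<^sup>2) * NN\<^sup>2"
proof -
  define G where "G = (\<lambda>i::nat. if i = n-1 then K else idm)"
  define cr where "cr = 1 / sqrt (1 + eps\<^sup>2)"
  define cc where "cc = complex_of_real cr"
  have pos: "1 + eps\<^sup>2 > 0" by (simp add: add_pos_nonneg)
  have cr2: "cr\<^sup>2 = 1 / (1 + eps\<^sup>2)" using pos by (simp add: cr_def power_divide)
  have cr2b: "cr\<^sup>2 * (1 + eps\<^sup>2) = 1" using pos by (simp add: cr2)
  have ee: "2 * eps \<le> 1 + eps\<^sup>2" using sum_squares_bound[of 1 eps] by (simp add: power2_eq_square)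
  have cr2c: "cr\<^sup>2 * (2 * eps) \<le> 1"
  proof -
    have "cr\<^sup>2 * (2 * eps) \<le> cr\<^sup>2 * (1 + eps\<^sup>2)" using ee by (intro mult_left_mono) auto
    then show ?thesis using cr2b by simp
  qed
  define A1 where "A1 = (\<lambda>a b. cc * K a b)"
  define A2 where "A2 = (\<lambda>a b. cc * mmul 4 K swap4 a b)"
  have LI: "local_instr 4 [A1, A2]"
    unfolding local_instr_def
  proof
    fix v :: "nat \<Rightarrow> complex"
    define v' where "v' = (\<lambda>b. v (if b = 1 then 2 else if b = (2::nat) then 1 else b))"
    have q1: "(\<Sum>a<4. (cmod (\<Sum>b<4. A1 a b * v b))\<^sup>2) = cr\<^sup>2 * (\<Sum>b<4. D b * (cmod (v b))\<^sup>2)"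
    proof -
      have "(\<Sum>a<4. (cmod (\<Sum>b<4. A1 a b * v b))\<^sup>2) = (\<Sum>a<4. cr\<^sup>2 * (cmod (\<Sum>b<4. K a b * v b))\<^sup>2)"
        by (rule sum.cong) (simp_all add: A1_def cc_def sum_distrib_left[symmetric] mult.assoc norm_mult power_mult_distrib)
      also have "\<dots> = cr\<^sup>2 * (\<Sum>b<4. D b * (cmod (v b))\<^sup>2)"
        by (simp add: sum_distrib_left[symmetric] qform_diag[OF KD])
      finally show ?thesis .
    qed
    have q2: "(\<Sum>a<4. (cmod (\<Sum>b<4. A2 a b * v b))\<^sup>2) = cr\<^sup>2 * (\<Sum>b<4. D b * (cmod (v' b))\<^sup>2)"
    proof -
      have "(\<Sum>a<4. (cmod (\<Sum>b<4. A2 a b * v b))\<^sup>2) = (\<Sum>a<4. cr\<^sup>2 * (cmod (\<Sum>b<4. K a b * v' b))\<^sup>2)"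
      proof (rule sum.cong[OF refl])
        fix a
        have "(\<Sum>b<4. A2 a b * v b) = cc * (\<Sum>b<4. mmul 4 K swap4 a b * v b)"
          by (simp add: A2_def sum_distrib_left mult.assoc)
        also have "\<dots> = cc * (\<Sum>b<4. K a b * v' b)" by (simp only: mmul_swap_vec v'_def)
        finally show "(cmod (\<Sum>b<4. A2 a b * v b))\<^sup>2 = cr\<^sup>2 * (cmod (\<Sum>b<4. K a b * v' b))\<^sup>2"
          by (simp add: cc_def norm_mult power_mult_distrib)
      qed
      also have "\<dots> = cr\<^sup>2 * (\<Sum>b<4. D b * (cmod (v' b))\<^sup>2)"
        by (simp add: sum_distrib_left[symmetric] qform_diag[OF KD])
      finally show ?thesis .
    qed
    define X0 where "X0 = (cmod (v 0))\<^sup>2"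
    define X1 where "X1 = (cmod (v 1))\<^sup>2"
    define X2 where "X2 = (cmod (v 2))\<^sup>2"
    define X3 where "X3 = (cmod (v 3))\<^sup>2"
    have Xn: "X0 \<ge> 0" "X1 \<ge> 0" "X2 \<ge> 0" "X3 \<ge> 0" by (simp_all add: X0_def X1_def X2_def X3_def)
    have tot: "(\<Sum>A\<leftarrow>[A1, A2]. \<Sum>a<4. (cmod (\<Sum>b<4. A a b * v b))\<^sup>2)
        = cr\<^sup>2 * (2 * eps) * (X0 + X3) + cr\<^sup>2 * (1 + eps\<^sup>2) * (X1 + X2)"
    proof -
      have "(\<Sum>A\<leftarrow>[A1, A2]. \<Sum>a<4. (cmod (\<Sum>b<4. A a b * v b))\<^sup>2)
          = (\<Sum>a<4. (cmod (\<Sum>b<4. A1 a b * v b))\<^sup>2) + (\<Sum>a<4. (cmod (\<Sum>b<4. A2 a b * v b))\<^sup>2)"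
        by simp
      also have "\<dots> = cr\<^sup>2 * (\<Sum>b<4. D b * (cmod (v b))\<^sup>2) + cr\<^sup>2 * (\<Sum>b<4. D b * (cmod (v' b))\<^sup>2)"
        by (simp only: q1 q2)
      also have "\<dots> = cr\<^sup>2 * (2 * eps) * (X0 + X3) + cr\<^sup>2 * (1 + eps\<^sup>2) * (X1 + X2)"
        using Dv(2) by (simp add: sum4 Dv v'_def X0_def X1_def X2_def X3_def algebra_simps)
      finally show ?thesis .
    qed
    have "cr\<^sup>2 * (2 * eps) * (X0 + X3) \<le> X0 + X3"
      using cr2c Xn mult_right_mono[of "cr\<^sup>2 * (2 * eps)" 1 "X0 + X3"] by simp
    then have "(\<Sum>A\<leftarrow>[A1, A2]. \<Sum>a<4. (cmod (\<Sum>b<4. A a b * v b))\<^sup>2) \<le> X0 + X1 + X2 + X3"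
      using tot cr2b by simp
    also have "\<dots> = (\<Sum>a<4. (cmod (v a))\<^sup>2)" by (simp add: sum4 X0_def X1_def X2_def X3_def)
    finally show "(\<Sum>A\<leftarrow>[A1, A2]. \<Sum>a<4. (cmod (\<Sum>b<4. A a b * v b))\<^sup>2) \<le> (\<Sum>a<4. (cmod (v a))\<^sup>2)" .
  qed
  have nn: "n - 1 < n" using n by simp
  define Ks where "Ks = map (\<lambda>A. \<lambda>i. if i = n-1 then A else idm) [A1, A2]"
  have LK: "LOCC n 4 Ks" unfolding Ks_def by (rule LOCC.LOCC_local[OF nn LI])
  obtain P where P: "LOCC n 4 [P]" "\<forall>i<n. \<forall>a<4. \<forall>b<4. P i a b = (if i < n-1 then swap4 else idm) a b"
    using LOCC_swaps[of "n-1" n] by auto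
  define Ls where "Ls = (\<lambda>k::nat. if k = 0 then [\<lambda>i::nat. idm] else [P])"
  have LL: "\<forall>k<length Ks. LOCC n 4 (Ls k)" using P(1) LOCC.LOCC_id[of n 4] by (simp add: Ls_def Ks_def)
  define Ms where "Ms = concat (map (\<lambda>k. map (\<lambda>L i. mmul 4 (L i) ((Ks ! k) i)) (Ls k)) [0..<length Ks])"
  have LM: "LOCC n 4 Ms" unfolding Ms_def by (rule LOCC.LOCC_comp[OF LK LL])
  have upt2: "[0..<2] = [0::nat, 1]" by (simp add: upt_rec)
  have Ms_eq: "Ms = [\<lambda>i. mmul 4 idm ((Ks!0) i), \<lambda>i. mmul 4 (P i) ((Ks!1) i)]"
    by (simp add: Ms_def Ks_def Ls_def upt2)
  define M1 where "M1 = (\<lambda>i. if i = n-1 then A1 else idm)"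
  define M2 where "M2 = (\<lambda>i. mmul 4 (M1 i) swap4)"
  have e1: "prod_apply n 4 (Ms!0) = prod_apply n 4 M1"
    by (rule ext, rule prod_apply_cong) (auto simp: Ms_eq Ks_def M1_def mmul_idm_l)
  have e2: "prod_apply n 4 (Ms!1) = prod_apply n 4 M2"
  proof (rule ext, rule prod_apply_cong)
    fix i a b :: nat assume i: "i < n" and a: "a < 4" and b: "b < 4"
    have "(Ms!1) i a b = mmul 4 (P i) ((Ks!1) i) a b" by (simp add: Ms_eq)
    also have "\<dots> = mmul 4 (if i < n-1 then swap4 else idm) ((Ks!1) i) a b"
    proof (rule mmul_cong)
      fix c :: nat assume "c < 4"
      then show "P i a c = (if i < n-1 then swap4 else idm) a c" using P(2) i a by blast
    qed simp
    also have "\<dots> = M2 i a b"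
    proof (cases "i = n-1")
      case True
      then show ?thesis using a b
        by (simp add: Ks_def M1_def M2_def A2_def A1_def mmul_idm_l) (simp add: mmul_def sum_distrib_left mult.assoc)
    next
      case False
      then have "i < n-1" using i by simp
      then show ?thesis using a b False by (simp add: Ks_def M1_def M2_def mmul_idm_l mmul_idm_r)
    qed
    finally show "(Ms!1) i a b = M2 i a b" .
  qed simp
  have sp: "succ_prob n 4 Ms Phi (\<lambda>ys. prod_apply n 4 G Phi ys / complex_of_real NN)
      = succ_prob n 4 [M1, M2] Phi (\<lambda>ys. prod_apply n 4 G Phi ys / complex_of_real NN)"
  proof (rule succ_prob_cong)
    show "length Ms = length [M1, M2]" by (simp add: Ms_eq)
    show "\<forall>k<length Ms. prod_apply n 4 (Ms ! k) = prod_apply n 4 ([M1, M2] ! k)"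
    proof (intro allI impI)
      fix k assume "k < length Ms"
      then have "k = 0 \<or> k = 1" by (simp add: Ms_eq) linarith
      then show "prod_apply n 4 (Ms ! k) = prod_apply n 4 ([M1, M2] ! k)" using e1 e2 by auto
    qed
  qed
  have M1G: "M1 = G(n-1 := (\<lambda>a b. cc * G (n-1) a b))"
    by (rule ext) (simp add: M1_def G_def A1_def)
  have PM1: "prod_apply n 4 M1 Phi = (\<lambda>ys. cc * prod_apply n 4 G Phi ys)"
    unfolding M1G by (rule prod_apply_scale[OF nn])
  have PM2: "prod_apply n 4 M2 Phi = (\<lambda>ys. cc * prod_apply n 4 G Phi ys)"
    unfolding M2_def prod_apply_comp[symmetric] swPhi by (rule PM1)
  have hprop: "proportional n 4 (\<lambda>ys. cc * prod_apply n 4 G Phi ys) (\<lambda>ys. prod_apply n 4 G Phi ys / complex_of_real NN)"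
    unfolding proportional_def using NNpos by (intro exI[of _ "cc * complex_of_real NN"]) auto
  have nrm: "(vnorm n 4 (\<lambda>ys. cc * prod_apply n 4 G Phi ys))\<^sup>2 = cr\<^sup>2 * NN\<^sup>2"
  proof -
    have crn: "cr \<ge> 0" by (simp add: cr_def)
    have ccn: "cmod cc = cr" unfolding cc_def using crn by simp
    show ?thesis by (simp only: vnorm_smult ccn) (simp add: NN G_def power_mult_distrib)
  qed
  have "succ_prob n 4 [M1, M2] Phi (\<lambda>ys. prod_apply n 4 G Phi ys / complex_of_real NN) = 2 * (cr\<^sup>2 * NN\<^sup>2)"
    unfolding succ_prob_def using hprop nrm by (simp add: PM1 PM2)
  also have "\<dots> = 2 / (1 + eps\<^sup>2) * NN\<^sup>2" by (simp add: cr2)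
  finally show ?thesis using LM sp unfolding G_def by metis
qed



lemma LB1:
  assumes n: "0 < n" and d: "0 < d" and LI: "local_instr d [h]"
    and nn: "nn = vnorm n d (prod_apply n d (\<lambda>i. if i = n-1 then h else idm) psi)" and nnpos: "nn > 0"
  shows "\<exists>Ms. sep_op n d Ms \<and>
    succ_prob n d Ms psi (\<lambda>ys. prod_apply n d (\<lambda>i. if i = n-1 then h else idm) psi ys / complex_of_real nn) = nn\<^sup>2"
proof -
  have nn1: "n - 1 < n" using n by simp
  have L: "LOCC n d [\<lambda>i. if i = n-1 then h else idm]"
    using LOCC.LOCC_local[OF nn1 LI] by simp
  have hprop: "proportional n d (prod_apply n d (\<lambda>i. if i = n-1 then h else idm) psi)
      (\<lambda>ys. prod_apply n d (\<lambda>i. if i = n-1 then h else idm) psi ys / complex_of_real nn)"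
    unfolding proportional_def using nnpos by (intro exI[of _ "complex_of_real nn"]) auto
  have "succ_prob n d [\<lambda>i. if i = n-1 then h else idm] psi
      (\<lambda>ys. prod_apply n d (\<lambda>i. if i = n-1 then h else idm) psi ys / complex_of_real nn) = nn\<^sup>2"
    unfolding succ_prob_def using hprop by (simp add: nn)
  then show ?thesis using LOCC_sep[OF L d] by blast
qed

theorem mainTheorem6:
  fixes n :: nat and psi :: vec and eps :: real and h1 h2 :: lmat
  assumes n_pos: "n \<ge> 1"
    and psi_supp: "\<forall>xs. xs \<notin> Bas n 2 \<longrightarrow> psi xs = 0"
    and psi_norm: "vnorm n 2 psi = 1"
    and stab: "stabilizer n 4 (two_copy n psi psi) =
               {prod_apply n 4 (\<lambda>i. idm), prod_apply n 4 (\<lambda>i. swap4)}"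
    and eps: "0 < eps" "eps < 1"
    and h1_GL: "h1 \<in> GL 2" and h2_GL: "h2 \<in> GL 2"
    and H1: "\<forall>a<2. \<forall>b<2. mmul 2 (adj 2 h1) h1 a b =
               (if a = b then (if a = 0 then 1 else complex_of_real eps) else 0)"
    and H2: "\<forall>a<2. \<forall>b<2. mmul 2 (adj 2 h2) h2 a b =
               (if a = b then (if a = 0 then complex_of_real eps else 1) else 0)"
  defines "psi1 \<equiv> prod_apply n 2 (\<lambda>i. if i = n - 1 then h1 else idm) psi"
    and "psi2 \<equiv> prod_apply n 2 (\<lambda>i. if i = n - 1 then h2 else idm) psi"
    and "n1 \<equiv> vnorm n 2 (prod_apply n 2 (\<lambda>i. if i = n - 1 then h1 else idm) psi)"
    and "n2 \<equiv> vnorm n 2 (prod_apply n 2 (\<lambda>i. if i = n - 1 then h2 else idm) psi)"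
  shows "max_succ n 4 (two_copy n psi psi)
           (\<lambda>ys. two_copy n psi1 psi2 ys / complex_of_real (n1 * n2))
           = 2 / (1 + eps\<^sup>2) * (n1 * n2)\<^sup>2
       \<and> (\<exists>Ms. LOCC n 4 Ms \<and>
            succ_prob n 4 Ms (two_copy n psi psi)
              (\<lambda>ys. two_copy n psi1 psi2 ys / complex_of_real (n1 * n2))
            = 2 / (1 + eps\<^sup>2) * (n1 * n2)\<^sup>2)
       \<and> 2 / (1 + eps\<^sup>2) * (n1 * n2)\<^sup>2 > (n1 * n2)\<^sup>2
       \<and> max_succ n 2 psi (\<lambda>ys. psi1 ys / complex_of_real n1)
           * max_succ n 2 psi (\<lambda>ys. psi2 ys / complex_of_real n2) = (n1 * n2)\<^sup>2"
proof -
  have n: "0 < n" using n_pos by simp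
  have n1e: "n1 = vnorm n 2 (prod_apply n 2 (\<lambda>i. if i = n - 1 then h1 else idm) psi)" by (simp add: n1_def)
  have n2e: "n2 = vnorm n 2 (prod_apply n 2 (\<lambda>i. if i = n - 1 then h2 else idm) psi)" by (simp add: n2_def)
  define K where "K = kr h1 h2"
  define G where "G = (\<lambda>i::nat. if i = n-1 then K else idm)"
  have GPhi: "prod_apply n 4 G (two_copy n psi psi) = two_copy n psi1 psi2"
  proof -
    have "G = (\<lambda>i. kr ((\<lambda>i. if i = n-1 then h1 else idm) i) ((\<lambda>i. if i = n-1 then h2 else idm) i))"
      by (rule ext) (simp add: G_def K_def kr_idm)
    then show ?thesis unfolding psi1_def psi2_def by (simp add: two_copy_kron)
  qed
  have n1pos: "n1 > 0" unfolding n1_def by (rule norm_pos_GL[OF n h1_GL psi_supp psi_norm])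
  have n2pos: "n2 > 0" unfolding n2_def by (rule norm_pos_GL[OF n h2_GL psi_supp psi_norm])
  have NN: "n1 * n2 = vnorm n 4 (prod_apply n 4 (\<lambda>i. if i = n-1 then K else idm) (two_copy n psi psi))"
    using GPhi by (simp add: G_def two_copy_norm psi1_def psi2_def n1_def n2_def)
  have NNpos: "n1 * n2 > 0" using n1pos n2pos by simp
  have KGL: "K \<in> GL 4" unfolding K_def by (rule kr_GL[OF h1_GL h2_GL])
  define f1 where "f1 = (\<lambda>a::nat. if a = 0 then 1 else eps)"
  define f2 where "f2 = (\<lambda>a::nat. if a = 0 then eps else 1)"
  have H1': "\<forall>a<2. \<forall>b<2. mmul 2 (adj 2 h1) h1 a b = (if a = b then complex_of_real (f1 a) else 0)"
    using H1 by (simp add: f1_def)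
  have H2': "\<forall>a<2. \<forall>b<2. mmul 2 (adj 2 h2) h2 a b = (if a = b then complex_of_real (f2 a) else 0)"
    using H2 by (simp add: f2_def)
  define D where "D = (\<lambda>b::nat. f1 (b div 2) * f2 (b mod 2))"
  have KD: "mmul 4 (adj 4 K) K b b' = (if b = b' then complex_of_real (D b) else 0)"
    if "b < 4" "b' < 4" for b b'
    unfolding K_def adj_kr mmul_kr D_def by (rule kr_diag[OF H1' H2' that])
  have Dv: "D 0 = eps" "D 1 = 1" "D 2 = eps\<^sup>2" "D 3 = eps"
    by (simp_all add: D_def f1_def f2_def power2_eq_square)
  have K1: "(\<Sum>a<4. (cmod (K a 1))\<^sup>2) = 1"
    by (rule colsum_diag) (use KD[of 1 1] Dv in simp)
  have K2: "(\<Sum>a<4. (cmod (K a 2))\<^sup>2) = eps\<^sup>2"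
    by (rule colsum_diag) (use KD[of 2 2] Dv in simp)
  have swPhi: "prod_apply n 4 (\<lambda>i. swap4) (two_copy n psi psi) = two_copy n psi psi"
    by (rule stab_swap[OF stab])
  have UBt: "succ_prob n 4 Ms (two_copy n psi psi) (\<lambda>ys. two_copy n psi1 psi2 ys / complex_of_real (n1 * n2))
      \<le> 2 / (1 + eps\<^sup>2) * (n1 * n2)\<^sup>2" if "sep_op n 4 Ms" for Ms
    using UB2[OF n stab eps(1) KGL K1 K2 NN NNpos that] GPhi by (simp add: G_def)
  obtain Ms0 where Ms0: "LOCC n 4 Ms0" "succ_prob n 4 Ms0 (two_copy n psi psi)
      (\<lambda>ys. two_copy n psi1 psi2 ys / complex_of_real (n1 * n2)) = 2 / (1 + eps\<^sup>2) * (n1 * n2)\<^sup>2"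
    using LB2[OF n swPhi KD Dv _ NN NNpos] eps GPhi by (auto simp: G_def)
  have part1: "max_succ n 4 (two_copy n psi psi) (\<lambda>ys. two_copy n psi1 psi2 ys / complex_of_real (n1 * n2))
      = 2 / (1 + eps\<^sup>2) * (n1 * n2)\<^sup>2"
    by (rule max_succ_eq[OF UBt LOCC_sep[OF Ms0(1)] Ms0(2)]) auto
  have part3: "2 / (1 + eps\<^sup>2) * (n1 * n2)\<^sup>2 > (n1 * n2)\<^sup>2"
  proof -
    have e2: "eps\<^sup>2 < 1" using eps by (simp add: power_less_one_iff)
    have "2 / (1 + eps\<^sup>2) > 1" using e2 by (simp add: field_simps add_pos_nonneg)
    moreover have "(n1 * n2)\<^sup>2 > 0" using NNpos by (simp add: zero_less_power2) (use n1pos n2pos in auto)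
    ultimately have "1 * (n1 * n2)\<^sup>2 < 2 / (1 + eps\<^sup>2) * (n1 * n2)\<^sup>2"
      by (rule mult_strict_right_mono)
    then show ?thesis by (simp only: mult_1)
  qed
  have st1: "\<forall>S. (\<forall>i<n. S i \<in> GL 2) \<and> prod_apply n 2 S psi = psi \<longrightarrow> (\<forall>v. \<forall>ys\<in>Bas n 2. prod_apply n 2 S v ys = v ys)"
    using ST1[OF stab psi_supp n] by blast
  have flp: "\<forall>i<n. flr n 2 psi i" using flr_psi[OF st1 psi_supp] by blast
  have He1: "(\<Sum>a<2. (cmod (h1 a 0))\<^sup>2) = 1"
    by (rule colsum_diag) (use H1 in simp)
  have He2: "(\<Sum>a<2. (cmod (h2 a 1))\<^sup>2) = 1"
    by (rule colsum_diag) (use H2 in simp)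
  have LI1: "local_instr 2 [h1]"
    by (rule li_single[of 2 h1 f1]) (use H1' eps in \<open>auto simp: f1_def\<close>)
  have LI2: "local_instr 2 [h2]"
    by (rule li_single[of 2 h2 f2]) (use H2' eps in \<open>auto simp: f2_def\<close>)
  have m1: "max_succ n 2 psi (\<lambda>ys. psi1 ys / complex_of_real n1) = n1\<^sup>2"
  proof -
    obtain Ms where Ms: "sep_op n 2 Ms"
      "succ_prob n 2 Ms psi (\<lambda>ys. prod_apply n 2 (\<lambda>i. if i = n-1 then h1 else idm) psi ys / complex_of_real n1) = n1\<^sup>2"
      using LB1[OF n _ LI1 n1e n1pos] by auto
    show ?thesis unfolding psi1_def
      by (rule max_succ_eq[OF UB1[OF n flp psi_supp st1 h1_GL _ He1 n1e n1pos] Ms]) auto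
  qed
  have m2: "max_succ n 2 psi (\<lambda>ys. psi2 ys / complex_of_real n2) = n2\<^sup>2"
  proof -
    obtain Ms where Ms: "sep_op n 2 Ms"
      "succ_prob n 2 Ms psi (\<lambda>ys. prod_apply n 2 (\<lambda>i. if i = n-1 then h2 else idm) psi ys / complex_of_real n2) = n2\<^sup>2"
      using LB1[OF n _ LI2 n2e n2pos] by auto
    show ?thesis unfolding psi2_def
      by (rule max_succ_eq[OF UB1[OF n flp psi_supp st1 h2_GL _ He2 n2e n2pos] Ms]) auto
  qed
  show ?thesis using part1 Ms0 part3 m1 m2 by (auto simp: power_mult_distrib)
qed


end
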